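(* Consider $\min_{y\in\mathbb R^{n_y}}\sum_{i\in\mathcal I}f_i(y)$ with nonempty solution set $\mathcal Y^\star$, where each $f_i:\mathbb R^{n_y}\to\mathbb R$ depends only on $(y_p)_{p\in\mathcal N(i)}$, and the push-sum iteration described in the context. Assume: for all $k$ and $p$, (i) every $i\in\mathcal V_p$ has a self-loop in $\mathcal G^{\mathrm D,k}_p$, (ii) $\mathbf 1_{N_p}^\top W^k_p=\mathbf 1_{N_p}^\top$, (iii) $[W^k_p]_{i_p,j_p}\ge\nu$ for every edge from $j$ to $i$ in $\mathcal G^{\mathrm D,k}_p$, for some $\nu>0$; there is an integer $Q>0$ such that for every $p$ the graph $\bigcup_{t=kQ}^{(k+1)Q-1}\mathcal G^{\mathrm D,t}_p$ is strongly connected for all $k$; each $f_i$ is convex and there is $L>0$ with $\|g\|\le L$ for all $y$ and all $g\in\partial f_i(y)$; $(\gamma^k)$ is positive and non-increasing with $\sum_k\gamma^k=\infty$, $\sum_k(\gamma^k)^2<\infty$. Then the estimates converge to a common solution: there is $y^\star\in\mathcal Y^\star$ such that $\boldsymbol y^k_{i,p}\to y^\star_p$ for all $p$ and all $i\in\mathcal V_p$.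
   Context: Agents $\mathcal I=\{1,\dots,I\}$; $y=\mathrm{col}((y_p)_{p\in\mathcal P})$, $y_p\in\mathbb R^{n_{y_p}}$; $\mathcal N(i)$ is the set of blocks on which $f_i$ depends. For each $p$, a fixed set $\mathcal V_p\subseteq\mathcal I$ with $\{i:p\in\mathcal N(i)\}\subseteq\mathcal V_p$, $N_p=|\mathcal V_p|$, $i_p$ the position of $i$ in $\mathcal V_p$. For each $k$, $\mathcal G^{\mathrm D,k}_p$ is a directed graph on $\mathcal V_p$ (a subgraph of the time-$k$ communication graph) with compliant weight matrix $W^k_p\in\mathbb R^{N_p\times N_p}$ ($[W^k_p]_{i_p,j_p}>0$ iff there is an edge from $j$ to $i$, else $0$). A union of graphs on the same vertex set takes the union of edges. Iteration: for all $i$ and $p$ with $i\in\mathcal V_p$, initialize $\boldsymbol z^0_{i,p}\in\mathbb R^{n_{y_p}}$ arbitrary, $q^0_{i,p}=1$, and for $k\ge0$: $q^{k+1}_{i,p}=\sum_{j\in\mathcal V_p}[W^k_p]_{i_p,j_p}q^k_{j,p}$; $\boldsymbol w^{k+1}_{i,p}=\sum_{j\in\mathcal V_p}[W^k_p]_{i_p,j_p}\boldsymbol z^k_{j,p}$; $\boldsymbol y^{k+1}_{i,p}=\boldsymbol w^{k+1}_{i,p}/q^{k+1}_{i,p}$; $\boldsymbol z^{k+1}_{i,p}=\boldsymbol w^{k+1}_{i,p}-\gamma^k\boldsymbol g^{k+1}_{i,p}$, where $\boldsymbol g^{k+1}_{i,p}$ is the $y_p$-block of a subgradient of $f_i$ at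 $\tilde{\boldsymbol y}^{k+1}_i$, i.e., at the point whose block $p$ is $\boldsymbol y^{k+1}_{i,p}$ for the blocks $p$ with $i\in\mathcal V_p$ (on which $f_i$ depends). *)

theory Defs
  imports "HOL-Analysis.Analysis"
begin

text \<open>The decision vector y lives in R^{n_y}, modelled as real^'c with a finite
coordinate type 'c; each coordinate c belongs to the block blk c. The block y_p
is the restriction of y to the coordinates c with blk c = p.\<close>

definition subgradient :: "(real^'c \<Rightarrow> real) \<Rightarrow> real^'c \<Rightarrow> real^'c \<Rightarrow> bool" where
  "subgradient f y g \<longleftrightarrow> (\<forall>z. f z \<ge> f y + g \<bullet> (z - y))"

definition blockproj :: "('c \<Rightarrow> 'p) \<Rightarrow> 'p \<Rightarrow> real^'c \<Rightarrow> real^'c" where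
  "blockproj blk p v = (\<chi> c. if blk c = p then v $ c else 0)"

end

theory Submission
  imports Defs
begin

lemma subgrad_exists:
  fixes f :: "real^'c::finite \<Rightarrow> real"
  assumes cvx: "convex_on UNIV f"
  shows "\<exists>g. subgradient f x0 g"
proof -
  define S :: "((real^'c) \<times> real) set" where "S = {x0} \<times> {..<f x0}"
  define T where "T = epigraph UNIV f"
  have cS: "convex S" unfolding S_def by (intro convex_Times) auto
  have cT: "convex T" unfolding T_def using cvx convex_epigraph by blast
  have ne: "S \<noteq> {}" "T \<noteq> {}" unfolding S_def T_def epigraph_def
    by (auto intro!: exI[of _ "f x0 - 1"]) (auto intro!: exI[of _ "(x0, f x0)"])
  have dj: "S \<inter> T = {}" unfolding S_def T_def epigraph_def by auto
  obtain a b where a0: "a \<noteq> 0" and aS: "\<forall>x\<in>S. inner a x \<le> b" and aT: "\<forall>x\<in>T. inner a x \<ge> b"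
    using separating_hyperplane_sets[OF cS cT ne dj] by blast
  obtain a1 a2 where a: "a = (a1, a2)" by (cases a)
  have S': "a1 \<bullet> x0 + a2 * t \<le> b" if "t < f x0" for t
    using aS that unfolding S_def a by (auto simp: inner_Pair)
  have T': "a1 \<bullet> x + a2 * s \<ge> b" if "s \<ge> f x" for x s
    using aT that unfolding T_def epigraph_def a by (auto simp: inner_Pair)
  have "a2 * (f x0 - 1) \<le> a2 * f x0" using S'[of "f x0 - 1"] T'[of x0 "f x0"] by auto
  hence a2ge: "a2 \<ge> 0" by (simp add: algebra_simps)
  have a2pos: "a2 > 0"
  proof (rule ccontr)
    assume "\<not> a2 > 0" hence a20: "a2 = 0" using a2ge by auto
    hence a10: "a1 \<noteq> 0" using a0 a by (auto simp: zero_prod_def)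
    have "a1 \<bullet> x0 \<le> b" using S'[of "f x0 - 1"] a20 by auto
    moreover have "a1 \<bullet> (x0 - a1) \<ge> b" using T'[of "x0 - a1" "f (x0 - a1)"] a20 by auto
    ultimately have "a1 \<bullet> a1 \<le> 0" by (simp add: inner_diff_right)
    thus False using a10 by (metis inner_eq_zero_iff inner_ge_zero order_antisym)
  qed
  have key: "a1 \<bullet> x0 + a2 * f x0 \<le> b"
  proof (rule ccontr)
    assume h: "\<not> ?thesis"
    define t where "t = f x0 - (a1 \<bullet> x0 + a2 * f x0 - b) / (2 * a2)"
    have "t < f x0" unfolding t_def using h a2pos by (simp add: field_simps)
    from S'[OF this] have "a1 \<bullet> x0 + a2 * t \<le> b" .
    moreover have "a2 * t = a2 * f x0 - (a1 \<bullet> x0 + a2 * f x0 - b) / 2"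
      unfolding t_def using a2pos by (simp add: field_simps)
    ultimately show False using h by (simp add: field_simps)
  qed
  have "subgradient f x0 (- (1 / a2) *\<^sub>R a1)"
    unfolding subgradient_def
  proof
    fix x
    have "a1 \<bullet> x + a2 * f x \<ge> b" using T'[of x "f x"] by simp
    hence "a2 * f x \<ge> a2 * f x0 + a1 \<bullet> x0 - a1 \<bullet> x" using key by simp
    hence "f x \<ge> f x0 + (a1 \<bullet> x0 - a1 \<bullet> x) / a2" using a2pos by (simp add: field_simps)
    moreover have "(- (1 / a2) *\<^sub>R a1) \<bullet> (x - x0) = (a1 \<bullet> x0 - a1 \<bullet> x) / a2"
      using a2pos by (simp add: inner_diff_right diff_divide_distrib)
    ultimately show "f x0 + (- (1 / a2) *\<^sub>R a1) \<bullet> (x - x0) \<le> f x" by simp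
  qed
  thus ?thesis by blast
qed


lemma subgrad_zero:
  fixes f :: "real^'c::finite \<Rightarrow> real"
  assumes sg: "subgradient f y g"
    and dep: "\<And>u v. (\<forall>c. P c \<longrightarrow> u $ c = v $ c) \<Longrightarrow> f u = f v"
    and nP: "\<not> P c"
  shows "g $ c = 0"
proof -
  define z where "z = y + axis c (g $ c)"
  have "f z = f y" by (rule dep) (auto simp: z_def axis_def nP)
  moreover have "f z \<ge> f y + g \<bullet> (z - y)" using sg unfolding subgradient_def by blast
  moreover have "g \<bullet> (z - y) = (g $ c) * (g $ c)" by (simp add: z_def inner_axis)
  ultimately have "(g $ c) * (g $ c) \<le> 0" by simp
  thus ?thesis by (simp add: mult_le_0_iff) linarith
qed

lemma inner_vec_sum_cart: "(g::real^'c::finite) \<bullet> x = (\<Sum>c\<in>UNIV. g $ c * x $ c)"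
  by (simp add: inner_vec_def)

lemma lip_rel:
  fixes f :: "real^'c::finite \<Rightarrow> real"
  assumes cvx: "convex_on UNIV f"
    and dep: "\<And>u v. (\<forall>c. P c \<longrightarrow> u $ c = v $ c) \<Longrightarrow> f u = f v"
    and bnd: "\<And>u g. subgradient f u g \<Longrightarrow> norm g \<le> L"
  shows "f u - f v \<le> L * (\<Sum>c\<in>{c. P c}. \<bar>u $ c - v $ c\<bar>)"
proof -
  obtain g where sg: "subgradient f u g" using subgrad_exists[OF cvx] by blast
  have "f v \<ge> f u + g \<bullet> (v - u)" using sg unfolding subgradient_def by blast
  hence "f u - f v \<le> g \<bullet> (u - v)" by (simp add: inner_diff_right)
  also have "\<dots> = (\<Sum>c\<in>UNIV. g $ c * (u $ c - v $ c))" by (simp add: inner_vec_sum_cart)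
  also have "\<dots> = (\<Sum>c\<in>{c. P c}. g $ c * (u $ c - v $ c))"
    by (rule sum.mono_neutral_right) (auto simp: subgrad_zero[OF sg dep])
  also have "\<dots> \<le> (\<Sum>c\<in>{c. P c}. L * \<bar>u $ c - v $ c\<bar>)"
  proof (rule sum_mono)
    fix c
    have "\<bar>g $ c\<bar> \<le> L" using component_le_norm_cart[of g c] bnd[OF sg] by linarith
    hence "\<bar>g $ c * (u $ c - v $ c)\<bar> \<le> L * \<bar>u $ c - v $ c\<bar>"
      by (simp add: abs_mult mult_right_mono)
    thus "g $ c * (u $ c - v $ c) \<le> L * \<bar>u $ c - v $ c\<bar>" by linarith
  qed
  finally show ?thesis by (simp add: sum_distrib_left)
qed

fun reach :: "'a set \<Rightarrow> (nat \<Rightarrow> ('a \<times> 'a) set) \<Rightarrow> nat \<Rightarrow> 'a \<Rightarrow> nat \<Rightarrow> 'a set" where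
  "reach V E T j 0 = {j}"
| "reach V E T j (Suc d) = reach V E T j d \<union> {i \<in> V. \<exists>l\<in>reach V E T j d. (l, i) \<in> E (T + d)}"

lemma reach_sub: "j \<in> V \<Longrightarrow> reach V E T j d \<subseteq> V"
  by (induction d) auto

lemma reach_mono: "d \<le> d' \<Longrightarrow> reach V E T j d \<subseteq> reach V E T j d'"
proof (induction d' rule: dec_induct)
  case base then show ?case by simp
next
  case (step n) then show ?case by auto
qed

lemma reach_start: "j \<in> reach V E T j d"
  using reach_mono[of 0 d V E T j] by auto

lemma rtrancl_exit:
  assumes "(x, y) \<in> r\<^sup>*" "x \<in> A" "y \<notin> A"
  shows "\<exists>u v. (u, v) \<in> r \<and> u \<in> A \<and> v \<notin> A"
  using assms by (induction rule: rtrancl_induct) auto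

lemma reach_grow:
  assumes finV: "finite V" and jV: "j \<in> V"
    and Esub: "\<And>t. E t \<subseteq> V \<times> V"
    and conn: "\<And>T'. \<exists>a. T' \<le> a \<and> a + Q \<le> T' + 2*Q \<and> (\<forall>i\<in>V. \<forall>k\<in>V. (i, k) \<in> (\<Union>t\<in>{a..<a+Q}. E t)\<^sup>*)"
    and ne: "reach V E T j d \<noteq> V"
  shows "card (reach V E T j d) < card (reach V E T j (d + 2*Q))"
proof -
  obtain a where a1: "T + d \<le> a" and a2: "a + Q \<le> T + d + 2*Q"
    and ac: "\<forall>i\<in>V. \<forall>k\<in>V. (i, k) \<in> (\<Union>t\<in>{a..<a+Q}. E t)\<^sup>*"
    using conn[of "T + d"] by blast
  define R where "R = reach V E T j (a - T)"
  have dR: "reach V E T j d \<subseteq> R" unfolding R_def using a1 by (intro reach_mono) auto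
  have Rsub: "R \<subseteq> reach V E T j (d + 2*Q)" unfolding R_def using a2 by (intro reach_mono) auto
  have fin2: "finite (reach V E T j (d + 2*Q))" by (rule finite_subset[OF reach_sub[OF jV] finV])
  have "reach V E T j d \<subset> reach V E T j (d + 2*Q)"
  proof (cases "R = V")
    case True
    have "reach V E T j (d + 2*Q) = V" using Rsub True reach_sub[OF jV, of E T "d + 2*Q"] by (rule_tac equalityI) simp_all
    moreover have "reach V E T j d \<subseteq> V" by (rule reach_sub[OF jV])
    ultimately show ?thesis using ne by (simp add: psubset_eq)
  next
    case False
    then obtain y where yV: "y \<in> V" and yR: "y \<notin> R" using reach_sub[OF jV, of E T "a - T"] unfolding R_def by blast
    have jR: "j \<in> R" unfolding R_def by (rule reach_start)
    have "(j, y) \<in> (\<Union>t\<in>{a..<a+Q}. E t)\<^sup>*" using bspec[OF bspec[OF ac jV] yV] .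
    from rtrancl_exit[OF this jR yR] obtain u v t where uv: "(u, v) \<in> E t" and t: "t \<in> {a..<a+Q}"
      and uR: "u \<in> R" and vR: "v \<notin> R" by blast
    have uin: "u \<in> reach V E T j (t - T)" using uR unfolding R_def using reach_mono[of "a - T" "t - T" V E T j] diff_le_mono[of a t T] t by auto
    have vV: "v \<in> V" using subsetD[OF Esub uv] by simp
    have Tt: "T + (t - T) = t" using t a1 by auto
    have "v \<in> {i \<in> V. \<exists>l\<in>reach V E T j (t - T). (l, i) \<in> E (T + (t - T))}"
      using uin vV uv unfolding Tt by blast
    hence vin: "v \<in> reach V E T j (Suc (t - T))" by simp
    have "Suc (t - T) \<le> d + 2*Q" using t a2 a1 by auto
    hence "reach V E T j (Suc (t - T)) \<subseteq> reach V E T j (d + 2*Q)" by (rule reach_mono)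
    hence v2: "v \<in> reach V E T j (d + 2*Q)" using vin by blast
    have "reach V E T j d \<subseteq> reach V E T j (d + 2*Q)" by (rule reach_mono) simp
    then show ?thesis using dR vR v2 by blast
  qed
  thus ?thesis using fin2 by (rule psubset_card_mono[rotated])
qed

lemma reach_full:
  assumes finV: "finite V" and jV: "j \<in> V"
    and Esub: "\<And>t. E t \<subseteq> V \<times> V"
    and conn: "\<And>T'. \<exists>a. T' \<le> a \<and> a + Q \<le> T' + 2*Q \<and> (\<forall>i\<in>V. \<forall>k\<in>V. (i, k) \<in> (\<Union>t\<in>{a..<a+Q}. E t)\<^sup>*)"
  shows "reach V E T j (card V * (2*Q)) = V"
proof -
  have "reach V E T j (n * (2*Q)) = V \<or> n + 1 \<le> card (reach V E T j (n * (2*Q)))" for n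
  proof (induction n)
    case 0 then show ?case by simp
  next
    case (Suc n)
    have eq: "Suc n * (2*Q) = n * (2*Q) + 2*Q" by simp
    show ?case
    proof (cases "reach V E T j (n * (2*Q)) = V")
      case True
      then have "V \<subseteq> reach V E T j (Suc n * (2*Q))" using reach_mono[of "n * (2*Q)" "Suc n * (2*Q)" V E T j] by auto
      then show ?thesis using reach_sub[OF jV] by blast
    next
      case False
      with Suc have "n + 1 \<le> card (reach V E T j (n * (2*Q)))" by blast
      moreover have "card (reach V E T j (n * (2*Q))) < card (reach V E T j (Suc n * (2*Q)))"
        unfolding eq by (rule reach_grow[OF finV jV Esub conn False])
      ultimately show ?thesis by simp
    qed
  qed
  from this[of "card V"] show ?thesis
    using card_mono[OF finV reach_sub[OF jV, of E T "card V * (2*Q)"]] by auto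
qed

lemma sum_split_lo:
  fixes B x :: "'a \<Rightarrow> real"
  assumes finV: "finite V" and Brow: "(\<Sum>l\<in>V. B l) = 1"
    and Bnn: "\<And>l. l \<in> V \<Longrightarrow> B l \<ge> 0" and xlo: "\<And>l. l \<in> V \<Longrightarrow> x l \<ge> lo" and l0: "l0 \<in> V"
  shows "(\<Sum>l\<in>V. B l * x l) \<ge> lo + B l0 * (x l0 - lo)"
proof -
  have e1: "(\<Sum>l\<in>V. B l * x l) = (\<Sum>l\<in>V. B l * lo) + (\<Sum>l\<in>V. B l * (x l - lo))"
    by (simp add: sum.distrib[symmetric] algebra_simps)
  have e2: "(\<Sum>l\<in>V. B l * lo) = lo" using Brow by (simp add: sum_distrib_right[symmetric])
  have e3: "(\<Sum>l\<in>V. B l * (x l - lo)) \<ge> B l0 * (x l0 - lo)"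
    by (rule member_le_sum[OF l0 _ finV]) (simp add: Bnn xlo)
  show ?thesis using e1 e2 e3 by linarith
qed

lemma reach_lower:
  fixes x :: "nat \<Rightarrow> 'a \<Rightarrow> real" and B :: "nat \<Rightarrow> 'a \<Rightarrow> 'a \<Rightarrow> real"
  assumes finV: "finite V" and jV: "j \<in> V"
    and Bnn: "\<And>t i l. i \<in> V \<Longrightarrow> l \<in> V \<Longrightarrow> B t i l \<ge> 0"
    and Brow: "\<And>t i. i \<in> V \<Longrightarrow> (\<Sum>l\<in>V. B t i l) = 1"
    and Bedge: "\<And>t i l. i \<in> V \<Longrightarrow> l \<in> V \<Longrightarrow> (l, i) \<in> E t \<Longrightarrow> B t i l \<ge> \<eta>"
    and self: "\<And>t i. i \<in> V \<Longrightarrow> (i, i) \<in> E t"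
    and eta: "\<eta> \<ge> 0"
    and rec: "\<And>t i. i \<in> V \<Longrightarrow> x (Suc t) i \<ge> (\<Sum>l\<in>V. B t i l * x t l) - \<epsilon> t"
    and low: "\<And>l. l \<in> V \<Longrightarrow> x T l \<ge> m"
  shows "(\<forall>i\<in>V. x (T + d) i \<ge> m - (\<Sum>u<d. \<epsilon> (T + u))) \<and>
         (\<forall>i\<in>reach V E T j d. x (T + d) i \<ge> m + \<eta>^d * (x T j - m) - (\<Sum>u<d. \<epsilon> (T + u)))"
proof (induction d)
  case 0
  then show ?case using low by simp
next
  case (Suc d)
  define lo where "lo = m - (\<Sum>u<d. \<epsilon> (T + u))"
  have D0: "x T j - m \<ge> 0" using low[OF jV] by simp
  have IH1: "\<And>l. l \<in> V \<Longrightarrow> x (T + d) l \<ge> lo" using Suc.IH unfolding lo_def by blast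
  have IH2: "\<And>l. l \<in> reach V E T j d \<Longrightarrow> x (T + d) l - lo \<ge> \<eta>^d * (x T j - m)"
    using Suc.IH unfolding lo_def by fastforce
  have key: "x (T + Suc d) i \<ge> lo + B (T + d) i l0 * (x (T + d) l0 - lo) - \<epsilon> (T + d)"
    if "i \<in> V" "l0 \<in> V" for i l0
  proof -
    have "x (T + Suc d) i \<ge> (\<Sum>l\<in>V. B (T + d) i l * x (T + d) l) - \<epsilon> (T + d)"
      using rec[OF that(1), of "T + d"] by simp
    moreover have "(\<Sum>l\<in>V. B (T + d) i l * x (T + d) l) \<ge> lo + B (T + d) i l0 * (x (T + d) l0 - lo)"
      by (rule sum_split_lo[OF finV Brow[OF that(1)] Bnn[OF that(1)] IH1 that(2)])
    ultimately show ?thesis by linarith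
  qed
  have P1: "\<forall>i\<in>V. x (T + Suc d) i \<ge> m - (\<Sum>u<Suc d. \<epsilon> (T + u))"
  proof
    fix i assume iV: "i \<in> V"
    have "B (T + d) i j * (x (T + d) j - lo) \<ge> 0"
      using Bnn[OF iV jV] IH1[OF jV] by simp
    with key[OF iV jV] show "x (T + Suc d) i \<ge> m - (\<Sum>u<Suc d. \<epsilon> (T + u))"
      unfolding lo_def by simp
  qed
  have P2: "\<forall>i\<in>reach V E T j (Suc d). x (T + Suc d) i \<ge> m + \<eta>^Suc d * (x T j - m) - (\<Sum>u<Suc d. \<epsilon> (T + u))"
  proof
    fix i assume i: "i \<in> reach V E T j (Suc d)"
    have iV: "i \<in> V" using i reach_sub[OF jV] by blast
    obtain l0 where l0: "l0 \<in> reach V E T j d" and e: "(l0, i) \<in> E (T + d)"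
    proof (cases "i \<in> reach V E T j d")
      case True then show ?thesis using that self[OF iV] by blast
    next
      case False then show ?thesis using that i by auto
    qed
    have l0V: "l0 \<in> V" using l0 reach_sub[OF jV] by blast
    have Bl: "B (T + d) i l0 \<ge> \<eta>" by (rule Bedge[OF iV l0V e])
    have xl: "x (T + d) l0 - lo \<ge> \<eta>^d * (x T j - m)" by (rule IH2[OF l0])
    have "\<eta>^d * (x T j - m) \<ge> 0" using eta D0 by simp
    hence "B (T + d) i l0 * (x (T + d) l0 - lo) \<ge> \<eta> * (\<eta>^d * (x T j - m))"
      using Bl xl eta by (meson mult_mono order_trans)
    with key[OF iV l0V] show "x (T + Suc d) i \<ge> m + \<eta>^Suc d * (x T j - m) - (\<Sum>u<Suc d. \<epsilon> (T + u))"
      unfolding lo_def by (simp add: algebra_simps)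
  qed
  show ?case using P1 P2 by blast
qed


lemma spread_contract:
  fixes x e :: "nat \<Rightarrow> 'a \<Rightarrow> real" and B :: "nat \<Rightarrow> 'a \<Rightarrow> 'a \<Rightarrow> real"
  assumes finV: "finite V" and neV: "V \<noteq> {}"
    and Bnn: "\<And>t i l. i \<in> V \<Longrightarrow> l \<in> V \<Longrightarrow> B t i l \<ge> 0"
    and Brow: "\<And>t i. i \<in> V \<Longrightarrow> (\<Sum>l\<in>V. B t i l) = 1"
    and Bedge: "\<And>t i l. i \<in> V \<Longrightarrow> l \<in> V \<Longrightarrow> (l, i) \<in> E t \<Longrightarrow> B t i l \<ge> \<eta>"
    and self: "\<And>t i. i \<in> V \<Longrightarrow> (i, i) \<in> E t"
    and eta: "\<eta> \<ge> 0"
    and Esub: "\<And>t. E t \<subseteq> V \<times> V"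
    and conn: "\<And>T'. \<exists>a. T' \<le> a \<and> a + Q \<le> T' + 2*Q \<and> (\<forall>i\<in>V. \<forall>k\<in>V. (i, k) \<in> (\<Union>t\<in>{a..<a+Q}. E t)\<^sup>*)"
    and rec: "\<And>t i. i \<in> V \<Longrightarrow> x (Suc t) i = (\<Sum>l\<in>V. B t i l * x t l) + e t i"
    and eb: "\<And>t i. i \<in> V \<Longrightarrow> \<bar>e t i\<bar> \<le> \<epsilon> t"
  shows "Max (x (T + card V * (2*Q)) ` V) - Min (x (T + card V * (2*Q)) ` V)
         \<le> (1 - \<eta>^(card V * (2*Q))) * (Max (x T ` V) - Min (x T ` V)) + 2 * (\<Sum>u<card V * (2*Q). \<epsilon> (T + u))"
proof -
  define M where "M = card V * (2*Q)"
  obtain j where jV: "j \<in> V" using neV by blast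
  define m where "m = Min (x T ` V)"
  define Mx where "Mx = Max (x T ` V)"
  define S where "S = (\<Sum>u<M. \<epsilon> (T + u))"
  have mle: "\<And>l. l \<in> V \<Longrightarrow> x T l \<ge> m" unfolding m_def using finV by auto
  have Mge: "\<And>l. l \<in> V \<Longrightarrow> - x T l \<ge> - Mx" unfolding Mx_def using finV by auto
  have full: "reach V E T j M = V" unfolding M_def by (rule reach_full[OF finV jV Esub conn])
  have rec1: "x (Suc t) i \<ge> (\<Sum>l\<in>V. B t i l * x t l) - \<epsilon> t" if "i \<in> V" for t i
    using rec[OF that, of t] eb[OF that, of t] by linarith
  have rec2: "- x (Suc t) i \<ge> (\<Sum>l\<in>V. B t i l * (- x t l)) - \<epsilon> t" if "i \<in> V" for t i
    using rec[OF that, of t] eb[OF that, of t] by (simp add: sum_negf)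
  have L: "\<forall>i\<in>V. x (T + M) i \<ge> m + \<eta>^M * (x T j - m) - S"
    using conjunct2[OF reach_lower[where x=x and \<epsilon>=\<epsilon> and m=m and T=T and d=M and B=B and E=E and \<eta>=\<eta> and j=j and V=V, OF finV jV Bnn Brow Bedge self eta rec1 mle]]
    unfolding full S_def .
  have U: "\<forall>i\<in>V. - x (T + M) i \<ge> - Mx + \<eta>^M * (- x T j - - Mx) - S"
    using conjunct2[OF reach_lower[where x="\<lambda>t i. - x t i" and \<epsilon>=\<epsilon> and m="- Mx" and T=T and d=M and B=B and E=E and \<eta>=\<eta> and j=j and V=V, OF finV jV Bnn Brow Bedge self eta rec2 Mge]]
    unfolding full S_def .
  have Ui: "x (T + M) i \<le> Mx - \<eta>^M * (Mx - x T j) + S" if "i \<in> V" for i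
  proof -
    have "- x (T + M) i \<ge> - Mx + \<eta>^M * (- x T j - - Mx) - S" using U that by blast
    moreover have "\<eta>^M * (- x T j - - Mx) = \<eta>^M * (Mx - x T j)" by simp
    ultimately show ?thesis by linarith
  qed
  have Li: "x (T + M) i \<ge> m + \<eta>^M * (x T j - m) - S" if "i \<in> V" for i
    using L that by blast
  have fi: "finite (x (T + M) ` V)" "x (T + M) ` V \<noteq> {}" using finV neV by auto
  have A1: "Max (x (T + M) ` V) \<le> Mx - \<eta>^M * (Mx - x T j) + S"
    using Ui by (subst Max_le_iff[OF fi]) blast
  have A2: "Min (x (T + M) ` V) \<ge> m + \<eta>^M * (x T j - m) - S"
    using Li by (subst Min_ge_iff[OF fi]) blast
  have "\<eta>^M * (Mx - x T j) + \<eta>^M * (x T j - m) = \<eta>^M * (Mx - m)" by (simp add: algebra_simps)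
  hence "Max (x (T + M) ` V) - Min (x (T + M) ` V) \<le> (1 - \<eta>^M) * (Mx - m) + 2 * S"
    using A1 A2 by (simp add: algebra_simps)
  thus ?thesis unfolding M_def[symmetric] S_def Mx_def m_def by simp
qed

lemma noninc_add: "(\<And>k. \<gamma> (Suc k) \<le> (\<gamma> k::real)) \<Longrightarrow> \<gamma> (k + d) \<le> \<gamma> k"
proof (induction d)
  case 0 then show ?case by simp
next
  case (Suc d) then show ?case using order_trans[OF Suc.prems[of "k+d"] Suc.IH] by simp
qed

lemma sum_shift_M: "(\<Sum>k<n + M. f k) = (\<Sum>k<M. f k) + (\<Sum>k<n. f (k + M) :: real)" for f :: "nat \<Rightarrow> real" and n M :: nat
  by (induction n) (simp_all add: algebra_simps)

lemma seq_contract_summable: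
  fixes a \<gamma> :: "nat \<Rightarrow> real"
  assumes a0: "\<And>k. a k \<ge> 0" and rho: "0 \<le> \<rho>" "\<rho> < 1" and C: "C \<ge> 0"
    and rec: "\<And>k. a (k + M) \<le> \<rho> * a k + C * \<gamma> k"
    and g0: "\<And>k. \<gamma> k \<ge> 0" and gdec: "\<And>k. \<gamma> (Suc k) \<le> \<gamma> k"
    and gsq: "summable (\<lambda>k. (\<gamma> k)\<^sup>2)"
  shows "summable (\<lambda>k. \<gamma> k * a k)"
proof (rule summableI_nonneg_bounded)
  fix k show "0 \<le> \<gamma> k * a k" using a0 g0 by simp
next
  fix n
  define P where "P n = (\<Sum>k<n. \<gamma> k * a k)" for n
  define S where "S = (\<Sum>k. (\<gamma> k)\<^sup>2)"
  have Pmono: "P n \<le> P (n + M)" unfolding P_def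
    by (rule sum_mono2) (auto simp: a0 g0)
  have "P (n + M) - P M = (\<Sum>k<n. \<gamma> (k + M) * a (k + M))"
    unfolding P_def sum_shift_M by simp
  also have "\<dots> \<le> (\<Sum>k<n. \<rho> * (\<gamma> k * a k) + C * (\<gamma> k)\<^sup>2)"
  proof (rule sum_mono)
    fix k
    have "\<gamma> (k + M) * a (k + M) \<le> \<gamma> k * a (k + M)"
      using noninc_add[of \<gamma> k M, OF gdec] a0 by (simp add: mult_right_mono)
    also have "\<dots> \<le> \<gamma> k * (\<rho> * a k + C * \<gamma> k)" using rec[of k] g0[of k] by (simp add: mult_left_mono)
    finally show "\<gamma> (k + M) * a (k + M) \<le> \<rho> * (\<gamma> k * a k) + C * (\<gamma> k)\<^sup>2"
      by (simp add: algebra_simps power2_eq_square)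
  qed
  also have "\<dots> = \<rho> * P n + C * (\<Sum>k<n. (\<gamma> k)\<^sup>2)"
    unfolding P_def by (simp add: sum.distrib sum_distrib_left)
  also have "\<dots> \<le> \<rho> * P n + C * S"
    using sum_le_suminf[OF gsq, of "{..<n}"] C unfolding S_def by (simp add: mult_left_mono)
  finally have "P n \<le> P M + \<rho> * P n + C * S" using Pmono by linarith
  hence "(1 - \<rho>) * P n \<le> P M + C * S" by (simp add: algebra_simps)
  hence "P n \<le> (P M + C * S) / (1 - \<rho>)" using rho by (simp add: field_simps)
  thus "(\<Sum>k<n. \<gamma> k * a k) \<le> (P M + C * S) / (1 - \<rho>)" unfolding P_def .
qed

lemma seq_contract_lim:
  fixes a \<gamma> :: "nat \<Rightarrow> real"
  assumes a0: "\<And>k. a k \<ge> 0" and rho: "0 \<le> \<rho>" "\<rho> < 1" and C: "C \<ge> 0" and M: "M > 0"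
    and rec: "\<And>k. a (k + M) \<le> \<rho> * a k + C * \<gamma> k"
    and glim: "\<gamma> \<longlonglongrightarrow> 0"
  shows "a \<longlonglongrightarrow> 0"
proof (rule LIMSEQ_I)
  fix r :: real assume r: "r > 0"
  define e where "e = r / 3"
  have e: "e > 0" using r unfolding e_def by simp
  have "eventually (\<lambda>k. norm (\<gamma> k) < e * (1 - \<rho>) / (C + 1)) sequentially"
    using glim rho e C by (intro order_tendstoD(2)[OF tendsto_norm_zero[OF glim]]) (simp add: field_simps)
  then obtain K where K: "\<And>k. k \<ge> K \<Longrightarrow> norm (\<gamma> k) < e * (1 - \<rho>) / (C + 1)"
    by (auto simp: eventually_sequentially)
  have step: "a (k + M) \<le> \<rho> * a k + e * (1 - \<rho>)" if "k \<ge> K" for k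
  proof -
    have "C * \<gamma> k \<le> C * (e * (1 - \<rho>) / (C + 1))"
      using K[OF that] C by (intro mult_left_mono) auto
    also have "\<dots> \<le> e * (1 - \<rho>)"
      using C e rho by (simp add: field_simps mult_left_mono)
    finally show ?thesis using rec[of k] by linarith
  qed
  have blk: "a (K + q + n * M) \<le> e + \<rho>^n * a (K + q)" for q n
  proof (induction n)
    case 0 then show ?case using e by simp
  next
    case (Suc n)
    have "a (K + q + Suc n * M) = a ((K + q + n * M) + M)" by (simp add: algebra_simps)
    also have "\<dots> \<le> \<rho> * a (K + q + n * M) + e * (1 - \<rho>)" by (rule step) simp
    also have "\<dots> \<le> \<rho> * (e + \<rho>^n * a (K + q)) + e * (1 - \<rho>)"
      using Suc.IH rho by (simp add: mult_left_mono)
    also have "\<dots> = e + \<rho>^Suc n * a (K + q)" by (simp add: algebra_simps)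
    finally show ?case .
  qed
  define A where "A = (\<Sum>q<M. a (K + q))"
  have A0: "A \<ge> 0" unfolding A_def by (rule sum_nonneg) (simp add: a0)
  have Aq: "a (K + q) \<le> A" if "q < M" for q
    unfolding A_def by (rule member_le_sum) (auto simp: a0 that)
  obtain n0 where n0: "\<rho>^n0 < e / (A + 1)" using real_arch_pow_inv[of "e / (A + 1)" \<rho>] e A0 rho by auto
  show "\<exists>no. \<forall>n\<ge>no. norm (a n - 0) < r"
  proof (intro exI allI impI)
    fix k assume k: "k \<ge> K + n0 * M"
    define q where "q = (k - K) mod M"
    define n where "n = (k - K) div M"
    have kq: "k = K + q + n * M" unfolding q_def n_def using k by simp
    have "n0 * M \<le> k - K" using k by simp
    hence "n0 * M div M \<le> (k - K) div M" by (rule div_le_mono)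
    hence nn: "n \<ge> n0" unfolding n_def using M by simp
    have qM: "q < M" unfolding q_def using M by simp
    have "\<rho>^n \<le> \<rho>^n0" using nn rho by (intro power_decreasing) auto
    hence "\<rho>^n * a (K + q) \<le> \<rho>^n0 * A"
      using Aq[OF qM] rho a0[of "K + q"] by (intro mult_mono) auto
    also have "\<dots> \<le> e / (A + 1) * A" using n0 A0 by (intro mult_right_mono) auto
    also have "\<dots> \<le> e" using A0 e by (simp add: field_simps)
    finally have "a k \<le> 2 * e" using blk[of q n] kq by simp
    thus "norm (a k - 0) < r" using a0[of k] e unfolding e_def by simp
  qed
qed

lemma conv_aux:
  fixes u \<beta> :: "nat \<Rightarrow> real"
  assumes u0: "\<And>t. u t \<ge> 0" and rec: "\<And>t. u (Suc t) \<le> u t + \<beta> t"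
    and bs: "summable \<beta>" and b0: "\<And>t. \<beta> t \<ge> 0"
  shows "convergent u"
proof -
  define v where "v t = u t - (\<Sum>s<t. \<beta> s)" for t
  have "v (Suc t) \<le> v t" for t using rec[of t] unfolding v_def by simp
  hence "decseq v" by (simp add: decseq_Suc_iff)
  moreover have "\<forall>t. - suminf \<beta> \<le> v t"
  proof
    fix t
    have "(\<Sum>s<t. \<beta> s) \<le> suminf \<beta>" using sum_le_suminf[OF bs] b0 by auto
    thus "- suminf \<beta> \<le> v t" using u0[of t] unfolding v_def by simp
  qed
  ultimately obtain L where L: "v \<longlonglongrightarrow> L" by (rule decseq_convergent)
  have "(\<lambda>t. v t + (\<Sum>s<t. \<beta> s)) \<longlonglongrightarrow> L + suminf \<beta>"
    by (intro tendsto_add L summable_LIMSEQ bs)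
  hence "u \<longlonglongrightarrow> L + suminf \<beta>" unfolding v_def by simp
  thus ?thesis unfolding convergent_def by blast
qed

lemma subseq_small:
  fixes h :: "nat \<Rightarrow> real"
  assumes H: "\<And>e K. e > 0 \<Longrightarrow> \<exists>t\<ge>K. h t < e"
  shows "\<exists>\<phi>. strict_mono \<phi> \<and> (\<forall>n. h (\<phi> n) < 1 / real (Suc n))"
proof -
  define \<phi> where "\<phi> = rec_nat (SOME t. h t < 1) (\<lambda>n p. SOME t. t \<ge> Suc p \<and> h t < 1 / real (Suc (Suc n)))"
  have P0: "h (\<phi> 0) < 1 / real (Suc 0)"
  proof -
    have "\<exists>t. h t < 1" using H[of 1 0] by auto
    hence "h (SOME t. h t < 1) < 1" by (rule someI_ex)
    thus ?thesis unfolding \<phi>_def by simp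
  qed
  have PS: "\<phi> (Suc n) \<ge> Suc (\<phi> n) \<and> h (\<phi> (Suc n)) < 1 / real (Suc (Suc n))" for n
  proof -
    have "\<exists>t. t \<ge> Suc (\<phi> n) \<and> h t < 1 / real (Suc (Suc n))" using H[of "1 / real (Suc (Suc n))" "Suc (\<phi> n)"] by auto
    hence "(SOME t. t \<ge> Suc (\<phi> n) \<and> h t < 1 / real (Suc (Suc n))) \<ge> Suc (\<phi> n) \<and>
           h (SOME t. t \<ge> Suc (\<phi> n) \<and> h t < 1 / real (Suc (Suc n))) < 1 / real (Suc (Suc n))" by (rule someI_ex)
    moreover have "\<phi> (Suc n) = (SOME t. t \<ge> Suc (\<phi> n) \<and> h t < 1 / real (Suc (Suc n)))" unfolding \<phi>_def by simp
    ultimately show ?thesis by simp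
  qed
  have "strict_mono \<phi>" unfolding strict_mono_Suc_iff using PS by (simp add: Suc_le_eq)
  moreover have "h (\<phi> n) < 1 / real (Suc n)" for n using P0 PS by (cases n) auto
  ultimately show ?thesis by blast
qed


definition Dw :: "('c::finite \<Rightarrow> real) \<Rightarrow> real^'c \<Rightarrow> real^'c \<Rightarrow> real" where
  "Dw d x y = (\<Sum>c\<in>UNIV. d c * (x $ c - y $ c)\<^sup>2)"

lemma opt_conv:
  fixes X :: "nat \<Rightarrow> real^'c::finite" and F :: "real^'c \<Rightarrow> real" and d :: "'c \<Rightarrow> real"
    and \<gamma> \<beta> :: "nat \<Rightarrow> real"
  assumes d: "\<And>c. d c = 0 \<or> d c \<ge> 1"
    and const: "\<And>c t. d c = 0 \<Longrightarrow> X t $ c = X 0 $ c"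
    and Fcont: "continuous_on UNIV F"
    and ys0: "\<And>y. F ys0 \<le> F y"
    and desc: "\<And>t y. (\<And>y'. F y \<le> F y') \<Longrightarrow> Dw d (X (Suc t)) y \<le> Dw d (X t) y - 2 * \<gamma> t * (F (X t) - F y) + \<beta> t"
    and bs: "summable \<beta>" and b0: "\<And>t. \<beta> t \<ge> 0"
    and g0: "\<And>t. \<gamma> t > 0" and gns: "\<not> summable \<gamma>"
  shows "\<exists>x. (\<forall>y'. F x \<le> F y') \<and> (\<forall>c. d c \<noteq> 0 \<longrightarrow> (\<lambda>t. X t $ c) \<longlonglongrightarrow> x $ c)"
proof -
  have d0: "d c \<ge> 0" for c using d[of c] by auto
  have Dw0: "Dw d x y \<ge> 0" for x y unfolding Dw_def by (intro sum_nonneg) (simp add: d0)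
  define h where "h t = F (X t) - F ys0" for t
  have h0: "h t \<ge> 0" for t unfolding h_def using ys0 by simp
  define D0 where "D0 = Dw d (X 0) ys0"
  have tele: "Dw d (X n) ys0 + 2 * (\<Sum>t<n. \<gamma> t * h t) \<le> D0 + (\<Sum>t<n. \<beta> t)" for n
  proof (induction n)
    case 0 then show ?case unfolding D0_def by simp
  next
    case (Suc n)
    have "Dw d (X (Suc n)) ys0 \<le> Dw d (X n) ys0 - 2 * \<gamma> n * h n + \<beta> n"
      using desc[of ys0 n] ys0 unfolding h_def by blast
    with Suc show ?case by simp
  qed
  define Sb where "Sb = suminf \<beta>"
  have bsum: "(\<Sum>t<n. \<beta> t) \<le> Sb" for n unfolding Sb_def using sum_le_suminf[OF bs] b0 by auto
  have Dbound: "Dw d (X n) ys0 \<le> D0 + Sb" for n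
    using tele[of n] bsum[of n] sum_nonneg[of "{..<n}" "\<lambda>t. \<gamma> t * h t"] g0 h0
    by (smt (verit) mult_nonneg_nonneg)
  have ghs: "summable (\<lambda>t. \<gamma> t * h t)"
  proof (rule summableI_nonneg_bounded)
    fix n show "0 \<le> \<gamma> n * h n" using g0[of n] h0[of n] by simp
  next
    fix n show "(\<Sum>t<n. \<gamma> t * h t) \<le> (D0 + Sb) / 2"
      using tele[of n] bsum[of n] Dw0[of "X n" ys0] by simp
  qed
  have freq: "\<exists>t\<ge>K. h t < e" if e: "e > 0" for e K
  proof (rule ccontr)
    assume "\<not> ?thesis"
    hence he: "\<And>t. t \<ge> K \<Longrightarrow> h t \<ge> e" by force
    have "summable (\<lambda>t. (\<gamma> t * h t) / e)" using ghs by (rule summable_divide)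
    moreover have "norm (\<gamma> t) \<le> (\<gamma> t * h t) / e" if "t \<ge> K" for t
    proof -
      have "\<gamma> t * e \<le> \<gamma> t * h t" using he[OF that] g0[of t] by (simp add: mult_left_mono)
      thus ?thesis using e g0[of t] by (simp add: field_simps)
    qed
    ultimately have "summable \<gamma>" by (rule summable_comparison_test')
    with gns show False by simp
  qed
  obtain \<phi> where phi: "strict_mono \<phi>" and hphi: "\<And>n. h (\<phi> n) < 1 / real (Suc n)"
    using subseq_small[of h] freq by blast
  define R where "R = (\<Sum>c\<in>UNIV. \<bar>ys0 $ c\<bar> + 1 + (D0 + Sb) + \<bar>X 0 $ c\<bar>)"
  have comp: "\<bar>X t $ c\<bar> \<le> \<bar>ys0 $ c\<bar> + 1 + (D0 + Sb) + \<bar>X 0 $ c\<bar>" for t c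
  proof (cases "d c = 0")
    case True
    have "D0 \<ge> 0" unfolding D0_def by (rule Dw0)
    moreover have "Sb \<ge> 0" using bsum[of 0] by simp
    moreover have "X t $ c = X 0 $ c" by (rule const[OF True])
    ultimately show ?thesis by simp
  next
    case False
    hence d1: "d c \<ge> 1" using d[of c] by auto
    have "1 * (X t $ c - ys0 $ c)\<^sup>2 \<le> d c * (X t $ c - ys0 $ c)\<^sup>2"
      by (rule mult_right_mono[OF d1]) simp
    hence "(X t $ c - ys0 $ c)\<^sup>2 \<le> d c * (X t $ c - ys0 $ c)\<^sup>2" by simp
    also have "\<dots> \<le> Dw d (X t) ys0" unfolding Dw_def
      by (rule member_le_sum) (auto simp: d0)
    also have "\<dots> \<le> D0 + Sb" by (rule Dbound)
    finally have sq: "(X t $ c - ys0 $ c)\<^sup>2 \<le> D0 + Sb" .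
    have "\<bar>X t $ c - ys0 $ c\<bar> \<le> 1 + (X t $ c - ys0 $ c)\<^sup>2"
    proof -
      define a where "a = \<bar>X t $ c - ys0 $ c\<bar>"
      have "0 \<le> (a - 1)\<^sup>2" by simp
      hence "0 \<le> a * a - 2 * a + 1" by (simp add: power2_eq_square algebra_simps)
      moreover have "a * a = (X t $ c - ys0 $ c)\<^sup>2" unfolding a_def by (simp add: power2_eq_square)
      moreover have "a \<ge> 0" unfolding a_def by simp
      ultimately show ?thesis unfolding a_def[symmetric] by linarith
    qed
    thus ?thesis using sq by linarith
  qed
  have nb: "norm (X t) \<le> R" for t
  proof -
    have "norm (X t) \<le> (\<Sum>c\<in>UNIV. \<bar>X t $ c\<bar>)" by (rule norm_le_l1_cart)
    also have "\<dots> \<le> R" unfolding R_def by (rule sum_mono) (rule comp)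
    finally show ?thesis .
  qed
  have "seq_compact (cball (0::real^'c) R)" by (rule compact_imp_seq_compact[OF compact_cball])
  moreover have "\<forall>n. (X \<circ> \<phi>) n \<in> cball 0 R" using nb by simp
  ultimately obtain l r where r: "strict_mono r" and lim: "(X \<circ> \<phi> \<circ> r) \<longlonglongrightarrow> l"
    using seq_compactE by metis
  define \<psi> where "\<psi> = \<phi> \<circ> r"
  have psi: "strict_mono \<psi>" unfolding \<psi>_def using phi r by (rule strict_mono_o)
  have limX: "(\<lambda>n. X (\<psi> n)) \<longlonglongrightarrow> l" using lim unfolding \<psi>_def by (simp add: comp_def)
  have "(\<lambda>n. h (\<phi> n)) \<longlonglongrightarrow> 0"
  proof (rule tendsto_sandwich[of "\<lambda>_. 0" _ _ "\<lambda>n. inverse (real (Suc n))"])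
    show "\<forall>\<^sub>F n in sequentially. 0 \<le> h (\<phi> n)" using h0 by simp
    show "\<forall>\<^sub>F n in sequentially. h (\<phi> n) \<le> inverse (real (Suc n))"
      using hphi by (simp add: inverse_eq_divide less_imp_le)
    show "(\<lambda>n. inverse (real (Suc n))) \<longlonglongrightarrow> 0" by (rule LIMSEQ_inverse_real_of_nat)
  qed simp
  hence "((\<lambda>n. h (\<phi> n)) \<circ> r) \<longlonglongrightarrow> 0" using r by (rule LIMSEQ_subseq_LIMSEQ)
  hence h1: "(\<lambda>n. F (X (\<psi> n)) - F ys0) \<longlonglongrightarrow> 0" unfolding \<psi>_def h_def by (simp add: comp_def)
  have h2: "(\<lambda>n. F (X (\<psi> n))) \<longlonglongrightarrow> F l"
    using continuous_on_tendsto_compose[OF Fcont limX] by simp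
  have "(\<lambda>n. F (X (\<psi> n)) - F ys0) \<longlonglongrightarrow> F l - F ys0" using h2 by (intro tendsto_diff) auto
  with h1 have "F l - F ys0 = 0" using LIMSEQ_unique by blast
  hence lmin: "\<forall>y'. F l \<le> F y'" using ys0 by simp
  define u where "u t = Dw d (X t) l" for t
  have uconv: "convergent u"
  proof (rule conv_aux[OF _ _ bs b0])
    fix t show "u t \<ge> 0" unfolding u_def by (rule Dw0)
  next
    fix t
    have "Dw d (X (Suc t)) l \<le> Dw d (X t) l - 2 * \<gamma> t * (F (X t) - F l) + \<beta> t"
      using desc[of l t] lmin by blast
    moreover have "2 * \<gamma> t * (F (X t) - F l) \<ge> 0" using g0[of t] lmin by simp
    ultimately show "u (Suc t) \<le> u t + \<beta> t" unfolding u_def by linarith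
  qed
  then obtain Lu where Lu: "u \<longlonglongrightarrow> Lu" unfolding convergent_def by blast
  have "(\<lambda>n. u (\<psi> n)) \<longlonglongrightarrow> Dw d l l"
    unfolding u_def Dw_def using limX by (intro tendsto_intros)
  moreover have "(\<lambda>n. u (\<psi> n)) \<longlonglongrightarrow> Lu" using LIMSEQ_subseq_LIMSEQ[OF Lu psi] by (simp add: comp_def)
  ultimately have "Lu = Dw d l l" using LIMSEQ_unique by blast
  hence u0: "u \<longlonglongrightarrow> 0" using Lu unfolding Dw_def by simp
  have conv: "(\<lambda>t. X t $ c) \<longlonglongrightarrow> l $ c" if dc: "d c \<noteq> 0" for c
  proof -
    have d1: "d c \<ge> 1" using d[of c] dc by auto
    have le: "(X t $ c - l $ c)\<^sup>2 \<le> u t" for t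
    proof -
      have "1 * (X t $ c - l $ c)\<^sup>2 \<le> d c * (X t $ c - l $ c)\<^sup>2"
        by (rule mult_right_mono[OF d1]) simp
      hence "(X t $ c - l $ c)\<^sup>2 \<le> d c * (X t $ c - l $ c)\<^sup>2" by simp
      also have "\<dots> \<le> u t" unfolding u_def Dw_def by (rule member_le_sum) (auto simp: d0)
      finally show ?thesis .
    qed
    have "(\<lambda>t. (X t $ c - l $ c)\<^sup>2) \<longlonglongrightarrow> 0"
      by (rule tendsto_sandwich[of "\<lambda>_. 0" _ _ u]) (auto simp: le u0)
    hence "(\<lambda>t. sqrt ((X t $ c - l $ c)\<^sup>2)) \<longlonglongrightarrow> sqrt 0" by (rule tendsto_real_sqrt)
    hence "(\<lambda>t. \<bar>X t $ c - l $ c\<bar>) \<longlonglongrightarrow> 0" by simp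
    hence "(\<lambda>t. X t $ c - l $ c) \<longlonglongrightarrow> 0" by (simp add: tendsto_rabs_zero_iff)
    thus ?thesis by (rule LIM_zero_cancel)
  qed
  show ?thesis using lmin conv by blast
qed


lemma reach_pos:
  fixes x :: "nat \<Rightarrow> 'a \<Rightarrow> real" and A :: "nat \<Rightarrow> 'a \<Rightarrow> 'a \<Rightarrow> real"
  assumes finV: "finite V" and jV: "j \<in> V"
    and Ann: "\<And>t i l. i \<in> V \<Longrightarrow> l \<in> V \<Longrightarrow> A t i l \<ge> 0"
    and Aedge: "\<And>t i l. i \<in> V \<Longrightarrow> l \<in> V \<Longrightarrow> (l, i) \<in> E t \<Longrightarrow> A t i l \<ge> \<eta>"
    and self: "\<And>t i. i \<in> V \<Longrightarrow> (i, i) \<in> E t"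
    and eta: "\<eta> \<ge> 0"
    and xnn: "\<And>t l. l \<in> V \<Longrightarrow> x t l \<ge> 0"
    and rec: "\<And>t i. i \<in> V \<Longrightarrow> x (Suc t) i = (\<Sum>l\<in>V. A t i l * x t l)"
  shows "\<forall>i\<in>reach V E T j d. x (T + d) i \<ge> \<eta>^d * x T j"
proof (induction d)
  case 0 then show ?case by simp
next
  case (Suc d)
  show ?case
  proof
    fix i assume i: "i \<in> reach V E T j (Suc d)"
    have iV: "i \<in> V" using i reach_sub[OF jV] by blast
    obtain l0 where l0: "l0 \<in> reach V E T j d" and e: "(l0, i) \<in> E (T + d)"
    proof (cases "i \<in> reach V E T j d")
      case True then show ?thesis using that self[OF iV] by blast
    next
      case False then show ?thesis using that i by auto
    qed
    have l0V: "l0 \<in> V" using l0 reach_sub[OF jV] by blast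
    have "A (T + d) i l0 * x (T + d) l0 \<le> (\<Sum>l\<in>V. A (T + d) i l * x (T + d) l)"
      by (rule member_le_sum[OF l0V _ finV]) (auto intro!: mult_nonneg_nonneg Ann xnn iV)
    moreover have "A (T + d) i l0 \<ge> \<eta>" by (rule Aedge[OF iV l0V e])
    moreover have "x (T + d) l0 \<ge> \<eta>^d * x T j" using Suc.IH l0 by blast
    moreover have "\<eta>^d * x T j \<ge> 0" using eta xnn[OF jV] by simp
    ultimately have "\<eta> * (\<eta>^d * x T j) \<le> (\<Sum>l\<in>V. A (T + d) i l * x (T + d) l)"
      by (meson eta mult_mono order_trans)
    thus "\<eta>^Suc d * x T j \<le> x (T + Suc d) i" using rec[OF iV, of "T + d"] by simp
  qed
qed

lemma exists_ge1:
  fixes x :: "'a \<Rightarrow> real"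
  assumes "finite S" "S \<noteq> {}" "(\<Sum>i\<in>S. x i) = real (card S)"
  shows "\<exists>j\<in>S. x j \<ge> 1"
proof (rule ccontr)
  assume "\<not> ?thesis"
  hence "\<And>j. j \<in> S \<Longrightarrow> x j < 1" by force
  hence "(\<Sum>i\<in>S. x i) < (\<Sum>i\<in>S. 1)" using assms by (intro sum_strict_mono) auto
  thus False using assms by simp
qed

lemma wavg:
  fixes a x :: "'a \<Rightarrow> real"
  assumes fin: "finite S" and ne: "S \<noteq> {}" and a0: "\<And>i. i \<in> S \<Longrightarrow> a i \<ge> 0" and a1: "(\<Sum>i\<in>S. a i) = 1"
  shows "Min (x ` S) \<le> (\<Sum>i\<in>S. a i * x i) \<and> (\<Sum>i\<in>S. a i * x i) \<le> Max (x ` S)"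
proof
  have "(\<Sum>i\<in>S. a i * Min (x ` S)) \<le> (\<Sum>i\<in>S. a i * x i)"
    using fin by (intro sum_mono mult_left_mono a0) auto
  thus "Min (x ` S) \<le> (\<Sum>i\<in>S. a i * x i)" using a1 by (simp add: sum_distrib_right[symmetric])
  have "(\<Sum>i\<in>S. a i * x i) \<le> (\<Sum>i\<in>S. a i * Max (x ` S))"
    using fin by (intro sum_mono mult_left_mono a0) auto
  thus "(\<Sum>i\<in>S. a i * x i) \<le> Max (x ` S)" using a1 by (simp add: sum_distrib_right[symmetric])
qed

locale PS =
  fixes f :: "'a::finite \<Rightarrow> real^'c::finite \<Rightarrow> real"
    and blk :: "'c \<Rightarrow> 'p::finite"
    and N :: "'a \<Rightarrow> 'p set"
    and V :: "'p \<Rightarrow> 'a set"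
    and E :: "nat \<Rightarrow> 'p \<Rightarrow> ('a \<times> 'a) set"
    and W :: "nat \<Rightarrow> 'p \<Rightarrow> 'a \<Rightarrow> 'a \<Rightarrow> real"
    and \<nu> L :: real and Q :: nat
    and \<gamma> :: "nat \<Rightarrow> real"
    and q :: "nat \<Rightarrow> 'a \<Rightarrow> 'p \<Rightarrow> real"
    and w y z :: "nat \<Rightarrow> 'a \<Rightarrow> 'p \<Rightarrow> real^'c"
    and ytil G :: "nat \<Rightarrow> 'a \<Rightarrow> real^'c"
  assumes solvable: "\<exists>ys. \<forall>y'. (\<Sum>i\<in>UNIV. f i ys) \<le> (\<Sum>i\<in>UNIV. f i y')"
    and depends: "\<And>i u v. (\<forall>c. blk c \<in> N i \<longrightarrow> u $ c = v $ c) \<Longrightarrow> f i u = f i v"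
    and V_sup: "\<And>p. {i. p \<in> N i} \<subseteq> V p"
    and E_sub: "\<And>k p. E k p \<subseteq> V p \<times> V p"
    and W_edge: "\<And>k p i j. i \<in> V p \<Longrightarrow> j \<in> V p \<Longrightarrow> (j, i) \<in> E k p \<Longrightarrow> W k p i j > 0"
    and W_noedge: "\<And>k p i j. i \<in> V p \<Longrightarrow> j \<in> V p \<Longrightarrow> (j, i) \<notin> E k p \<Longrightarrow> W k p i j = 0"
    and selfloop: "\<And>k p i. i \<in> V p \<Longrightarrow> (i, i) \<in> E k p"
    and col_stoch: "\<And>k p j. j \<in> V p \<Longrightarrow> (\<Sum>i\<in>V p. W k p i j) = 1"
    and nu_pos: "\<nu> > 0"
    and W_lb: "\<And>k p i j. (j, i) \<in> E k p \<Longrightarrow> W k p i j \<ge> \<nu>"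
    and Q_pos: "Q > 0"
    and strongly_conn: "\<And>p k i j. i \<in> V p \<Longrightarrow> j \<in> V p \<Longrightarrow>
          (i, j) \<in> (\<Union>t\<in>{k*Q..<(Suc k)*Q}. E t p)\<^sup>*"
    and convex: "\<And>i. convex_on UNIV (f i)"
    and L_pos: "L > 0"
    and subgrad_bound: "\<And>i u g. subgradient (f i) u g \<Longrightarrow> norm g \<le> L"
    and gamma_pos: "\<And>k. \<gamma> k > 0"
    and gamma_noninc: "\<And>k. \<gamma> (Suc k) \<le> \<gamma> k"
    and gamma_nonsum: "\<not> summable \<gamma>"
    and gamma_sq_sum: "summable (\<lambda>k. (\<gamma> k)\<^sup>2)"
    and q_init: "\<And>p i. i \<in> V p \<Longrightarrow> q 0 i p = 1"
    and q_step: "\<And>k p i. i \<in> V p \<Longrightarrow> q (Suc k) i p = (\<Sum>j\<in>V p. W k p i j * q k j p)"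
    and w_step: "\<And>k p i. i \<in> V p \<Longrightarrow> w (Suc k) i p = (\<Sum>j\<in>V p. W k p i j *\<^sub>R z k j p)"
    and y_step: "\<And>k p i. i \<in> V p \<Longrightarrow> y (Suc k) i p = (1 / q (Suc k) i p) *\<^sub>R w (Suc k) i p"
    and ytil_def: "\<And>k i c. i \<in> V (blk c) \<Longrightarrow> ytil k i $ c = y k i (blk c) $ c"
    and G_subgrad: "\<And>k i. subgradient (f i) (ytil (Suc k) i) (G (Suc k) i)"
    and z_step: "\<And>k p i. i \<in> V p \<Longrightarrow>
          z (Suc k) i p = w (Suc k) i p - \<gamma> k *\<^sub>R blockproj blk p (G (Suc k) i)"

begin

lemma W_nn: "i \<in> V p \<Longrightarrow> j \<in> V p \<Longrightarrow> W k p i j \<ge> 0"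
  using W_edge[of i p j k] W_noedge[of i p j k] by (cases "(j, i) \<in> E k p") auto

lemma W_le1: assumes "i \<in> V p" "j \<in> V p" shows "W k p i j \<le> 1"
proof -
  have "W k p i j \<le> (\<Sum>i'\<in>V p. W k p i' j)"
    by (rule member_le_sum) (auto simp: assms W_nn)
  thus ?thesis using col_stoch[OF assms(2)] by simp
qed

lemma nu_le1: "i \<in> V p \<Longrightarrow> \<nu> \<le> 1"
  using W_lb[OF selfloop, of i p 0] W_le1[of i p i 0] by simp

lemma finV: "finite (V p)" by simp

lemma q_sum: "(\<Sum>i\<in>V p. q k i p) = real (card (V p))"
proof (induction k)
  case 0 then show ?case using q_init by simp
next
  case (Suc k)
  have "(\<Sum>i\<in>V p. q (Suc k) i p) = (\<Sum>i\<in>V p. \<Sum>j\<in>V p. W k p i j * q k j p)"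
    using q_step by simp
  also have "\<dots> = (\<Sum>j\<in>V p. \<Sum>i\<in>V p. W k p i j * q k j p)" by (rule sum.swap)
  also have "\<dots> = (\<Sum>j\<in>V p. (\<Sum>i\<in>V p. W k p i j) * q k j p)" by (simp add: sum_distrib_right)
  also have "\<dots> = (\<Sum>j\<in>V p. q k j p)" using col_stoch by simp
  finally show ?case using Suc by simp
qed

lemma q_pos: "i \<in> V p \<Longrightarrow> q k i p > 0"
proof (induction k arbitrary: i)
  case 0 then show ?case using q_init by simp
next
  case (Suc k)
  have "W k p i i * q k i p \<le> (\<Sum>j\<in>V p. W k p i j * q k j p)"
    by (rule member_le_sum) (auto intro!: mult_nonneg_nonneg W_nn Suc.IH[THEN less_imp_le] Suc.prems)
  moreover have "W k p i i * q k i p > 0"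
    using W_edge[OF Suc.prems Suc.prems selfloop[OF Suc.prems]] Suc.IH[OF Suc.prems] by simp
  ultimately show ?case using q_step[OF Suc.prems] by simp
qed

lemma q_le: assumes "i \<in> V p" shows "q k i p \<le> real (card (V p))"
proof -
  have "q k i p \<le> (\<Sum>i\<in>V p. q k i p)"
    by (rule member_le_sum) (auto simp: assms intro: less_imp_le q_pos)
  thus ?thesis using q_sum by simp
qed


lemma conn_shift: "\<exists>a. T' \<le> a \<and> a + Q \<le> T' + 2*Q \<and> (\<forall>i\<in>V p. \<forall>k\<in>V p. (i, k) \<in> (\<Union>t\<in>{a..<a+Q}. E (t + s) p)\<^sup>*)"
proof -
  define n where "n = T' + s"
  define kk where "kk = n div Q + 1"
  define A where "A = kk * Q"
  have dm: "n div Q * Q + n mod Q = n" by (rule div_mult_mod_eq)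
  have mq: "n mod Q < Q" using Q_pos by simp
  have Aeq: "A = n div Q * Q + Q" unfolding A_def kk_def by simp
  have A1: "n < A" using Aeq dm mq by linarith
  have A2: "A \<le> n + Q" using Aeq dm by linarith
  define a where "a = A - s"
  have as: "a + s = A" unfolding a_def using A1 n_def by simp
  have UN: "(\<Union>t\<in>{a..<a+Q}. E (t + s) p) = (\<Union>t\<in>{kk*Q..<Suc kk*Q}. E t p)"
  proof (rule set_eqI)
    fix x
    show "x \<in> (\<Union>t\<in>{a..<a+Q}. E (t + s) p) \<longleftrightarrow> x \<in> (\<Union>t\<in>{kk*Q..<Suc kk*Q}. E t p)"
    proof
      assume "x \<in> (\<Union>t\<in>{a..<a+Q}. E (t + s) p)"
      then obtain t where t: "t \<in> {a..<a+Q}" and x: "x \<in> E (t + s) p" by blast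
      have "t + s \<in> {kk*Q..<Suc kk*Q}" using t as unfolding A_def by auto
      thus "x \<in> (\<Union>t\<in>{kk*Q..<Suc kk*Q}. E t p)" using x by blast
    next
      assume "x \<in> (\<Union>t\<in>{kk*Q..<Suc kk*Q}. E t p)"
      then obtain u where u: "u \<in> {kk*Q..<Suc kk*Q}" and x: "x \<in> E u p" by blast
      have "u - s \<in> {a..<a+Q}" "u - s + s = u" using u as unfolding A_def by auto
      thus "x \<in> (\<Union>t\<in>{a..<a+Q}. E (t + s) p)" using x by (metis UN_iff)
    qed
  qed
  have "T' \<le> a" using A1 as n_def by simp
  moreover have "a + Q \<le> T' + 2*Q" using A2 as n_def by simp
  moreover have "\<forall>i\<in>V p. \<forall>k\<in>V p. (i, k) \<in> (\<Union>t\<in>{a..<a+Q}. E (t + s) p)\<^sup>*"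
    unfolding UN using strongly_conn by blast
  ultimately show ?thesis by blast
qed


lemma conn0: "\<exists>a. T' \<le> a \<and> a + Q \<le> T' + 2*Q \<and> (\<forall>i\<in>V p. \<forall>k\<in>V p. (i, k) \<in> (\<Union>t\<in>{a..<a+Q}. (\<lambda>t. E t p) t)\<^sup>*)"
  using conn_shift[of T' p 0] by simp

lemma conn1: "\<exists>a. T' \<le> a \<and> a + Q \<le> T' + 2*Q \<and> (\<forall>i\<in>V p. \<forall>k\<in>V p. (i, k) \<in> (\<Union>t\<in>{a..<a+Q}. (\<lambda>t. E (Suc t) p) t)\<^sup>*)"
  using conn_shift[of T' p 1] by simp

lemma q_low: assumes iV: "i \<in> V p" shows "q t i p \<ge> \<nu> ^ (card (V p) * (2*Q))"
proof -
  define M where "M = card (V p) * (2*Q)"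
  have nu1: "\<nu> \<le> 1" by (rule nu_le1[OF iV])
  have rp: "\<forall>i'\<in>reach (V p) (\<lambda>t. E t p) T j d. q (T + d) i' p \<ge> \<nu>^d * q T j p" if jV: "j \<in> V p" for T j d
    by (rule reach_pos[where A="\<lambda>t. W t p" and x="\<lambda>t i. q t i p", OF finV jV])
       (auto intro: W_nn W_lb selfloop less_imp_le q_pos q_step nu_pos[THEN less_imp_le])
  show ?thesis
  proof (cases "t \<ge> M")
    case True
    define T where "T = t - M"
    have ne: "V p \<noteq> {}" using iV by blast
    obtain j where jV: "j \<in> V p" and j1: "q T j p \<ge> 1" using exists_ge1[OF finV ne q_sum] by blast
    have full: "reach (V p) (\<lambda>t. E t p) T j M = V p" unfolding M_def
      by (rule reach_full[OF finV jV _ conn0]) (use E_sub in blast)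
    have "q (T + M) i p \<ge> \<nu>^M * q T j p" using rp[OF jV, of T M] full iV by blast
    moreover have "\<nu>^M * q T j p \<ge> \<nu>^M" using j1 nu_pos by simp
    moreover have "T + M = t" unfolding T_def using True by simp
    ultimately show ?thesis unfolding M_def by simp
  next
    case False
    have "q (0 + t) i p \<ge> \<nu>^t * q 0 i p" using rp[OF iV, of 0 t] reach_start[of i "V p" "\<lambda>t. E t p" 0 t] by blast
    hence "q t i p \<ge> \<nu>^t" using q_init[OF iV] by simp
    moreover have "\<nu>^M \<le> \<nu>^t" using False nu1 nu_pos by (intro power_decreasing) auto
    ultimately show ?thesis unfolding M_def by simp
  qed
qed


definition "dl p = \<nu> ^ (card (V p) * (2*Q))"
definition "R c t i = y (Suc t) i (blk c) $ c"
definition "Bm p t i l = W (Suc t) p i l * q (Suc t) l p / q (Suc (Suc t)) i p"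
definition "ee c t i = - (\<gamma> t / q (Suc (Suc t)) i (blk c)) * (\<Sum>l\<in>V (blk c). W (Suc t) (blk c) i l * G (Suc t) l $ c)"

lemma dl_pos: "dl p > 0" unfolding dl_def using nu_pos by simp

lemma q_low': "i \<in> V p \<Longrightarrow> q t i p \<ge> dl p" unfolding dl_def by (rule q_low)

lemma w_eq: assumes "i \<in> V p" shows "w (Suc t) i p = q (Suc t) i p *\<^sub>R y (Suc t) i p"
  using y_step[OF assms, of t] q_pos[OF assms, of "Suc t"] by simp

lemma G_zero: "blk c \<notin> N j \<Longrightarrow> G (Suc k) j $ c = 0"
  by (rule subgrad_zero[OF G_subgrad, where P="\<lambda>c. blk c \<in> N j"]) (auto intro: depends)

lemma R_rec: assumes iV: "i \<in> V (blk c)"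
  shows "R c (Suc t) i = (\<Sum>l\<in>V (blk c). Bm (blk c) t i l * R c t l) + ee c t i"
proof -
  define p where "p = blk c"
  have iV': "i \<in> V p" using iV p_def by simp
  define q2 where "q2 = q (Suc (Suc t)) i p"
  have q2: "q2 > 0" unfolding q2_def by (rule q_pos[OF iV'])
  have zc: "z (Suc t) l p $ c = q (Suc t) l p * R c t l - \<gamma> t * G (Suc t) l $ c" if "l \<in> V p" for l
    using z_step[OF that, of t] w_eq[OF that, of t] unfolding R_def blockproj_def p_def by simp
  have "R c (Suc t) i = (1 / q2) * (w (Suc (Suc t)) i p $ c)"
    unfolding R_def q2_def using y_step[OF iV', of "Suc t"] p_def by simp
  also have "w (Suc (Suc t)) i p $ c = (\<Sum>l\<in>V p. W (Suc t) p i l * (z (Suc t) l p $ c))"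
    using w_step[OF iV', of "Suc t"] by simp
  also have "\<dots> = (\<Sum>l\<in>V p. W (Suc t) p i l * (q (Suc t) l p * R c t l - \<gamma> t * G (Suc t) l $ c))"
    by (rule sum.cong) (simp_all add: zc)
  also have "(1 / q2) * \<dots> = (\<Sum>l\<in>V p. (W (Suc t) p i l * q (Suc t) l p / q2) * R c t l)
      - (\<gamma> t / q2) * (\<Sum>l\<in>V p. W (Suc t) p i l * G (Suc t) l $ c)"
    by (simp add: sum_distrib_left sum_subtractf[symmetric] algebra_simps)
  finally show ?thesis unfolding Bm_def ee_def q2_def p_def by simp
qed

lemma Bm_nn: "i \<in> V p \<Longrightarrow> l \<in> V p \<Longrightarrow> Bm p t i l \<ge> 0"
  unfolding Bm_def by (intro divide_nonneg_nonneg mult_nonneg_nonneg W_nn less_imp_le[OF q_pos]) auto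

lemma Bm_row: assumes "i \<in> V p" shows "(\<Sum>l\<in>V p. Bm p t i l) = 1"
proof -
  have "(\<Sum>l\<in>V p. Bm p t i l) = (\<Sum>l\<in>V p. W (Suc t) p i l * q (Suc t) l p) / q (Suc (Suc t)) i p"
    unfolding Bm_def by (simp add: sum_divide_distrib)
  also have "\<dots> = 1" using q_step[OF assms, of "Suc t"] q_pos[OF assms, of "Suc (Suc t)"] by simp
  finally show ?thesis .
qed

lemma Bm_edge: assumes iV: "i \<in> V p" and lV: "l \<in> V p" and e: "(l, i) \<in> E (Suc t) p"
  shows "Bm p t i l \<ge> \<nu> * dl p / real (card (V p))"
proof -
  have W1: "W (Suc t) p i l \<ge> \<nu>" by (rule W_lb[OF e])
  have q1: "q (Suc t) l p \<ge> dl p" by (rule q_low'[OF lV])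
  have q2: "q (Suc (Suc t)) i p \<le> real (card (V p))" by (rule q_le[OF iV])
  have q2p: "q (Suc (Suc t)) i p > 0" by (rule q_pos[OF iV])
  have "\<nu> * dl p \<le> W (Suc t) p i l * q (Suc t) l p"
    using W1 q1 nu_pos dl_pos[of p] by (intro mult_mono) auto
  hence "\<nu> * dl p / real (card (V p)) \<le> W (Suc t) p i l * q (Suc t) l p / real (card (V p))"
    by (simp add: divide_right_mono)
  also have "\<dots> \<le> W (Suc t) p i l * q (Suc t) l p / q (Suc (Suc t)) i p"
    using q2 q2p W_nn[OF iV lV, of "Suc t"] q_pos[OF lV, of "Suc t"] by (intro divide_left_mono) auto
  finally show ?thesis unfolding Bm_def .
qed

lemma ee_bound: assumes iV: "i \<in> V (blk c)"
  shows "\<bar>ee c t i\<bar> \<le> \<gamma> t * (real (card (V (blk c))) * L / dl (blk c))"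
proof -
  define p where "p = blk c"
  have iV': "i \<in> V p" using iV p_def by simp
  have "\<bar>\<Sum>l\<in>V p. W (Suc t) p i l * G (Suc t) l $ c\<bar> \<le> (\<Sum>l\<in>V p. \<bar>W (Suc t) p i l * G (Suc t) l $ c\<bar>)"
    by (rule sum_abs)
  also have "\<dots> \<le> (\<Sum>l\<in>V p. L)"
  proof (rule sum_mono)
    fix l assume lV: "l \<in> V p"
    have "\<bar>G (Suc t) l $ c\<bar> \<le> L" using component_le_norm_cart[of "G (Suc t) l" c] subgrad_bound[OF G_subgrad] by (meson order_trans)
    moreover have "\<bar>W (Suc t) p i l\<bar> \<le> 1" using W_nn[OF iV' lV] W_le1[OF iV' lV] by simp
    ultimately have "\<bar>W (Suc t) p i l\<bar> * \<bar>G (Suc t) l $ c\<bar> \<le> 1 * L"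
      by (intro mult_mono) auto
    thus "\<bar>W (Suc t) p i l * G (Suc t) l $ c\<bar> \<le> L" by (simp add: abs_mult)
  qed
  also have "\<dots> = real (card (V p)) * L" by simp
  finally have S: "\<bar>\<Sum>l\<in>V p. W (Suc t) p i l * G (Suc t) l $ c\<bar> \<le> real (card (V p)) * L" .
  have qq: "q (Suc (Suc t)) i p \<ge> dl p" by (rule q_low'[OF iV'])
  have g: "\<gamma> t > 0" by (rule gamma_pos)
  have "\<bar>ee c t i\<bar> = (\<gamma> t / q (Suc (Suc t)) i p) * \<bar>\<Sum>l\<in>V p. W (Suc t) p i l * G (Suc t) l $ c\<bar>"
    unfolding ee_def p_def using g abs_of_pos[OF q_pos[OF iV, of "Suc (Suc t)"]] p_def by (simp add: abs_mult)
  also have "\<dots> \<le> (\<gamma> t / dl p) * (real (card (V p)) * L)"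
    using S qq g dl_pos[of p] q_pos[OF iV', of "Suc (Suc t)"] by (intro mult_mono divide_left_mono) auto
  finally show ?thesis unfolding p_def by simp
qed


definition "sp c t = (if V (blk c) = {} then 0 else Max (R c t ` V (blk c)) - Min (R c t ` V (blk c)))"
definition "Mp p = card (V p) * (2*Q)"
definition "eta p = \<nu> * dl p / real (card (V p))"
definition "K1 p = real (card (V p)) * L / dl p"

lemma sp_nn: "sp c t \<ge> 0"
proof (cases "V (blk c) = {}")
  case False
  then obtain i where iV: "i \<in> V (blk c)" by blast
  have "Min (R c t ` V (blk c)) \<le> R c t i" using iV by (intro Min_le) auto
  moreover have "R c t i \<le> Max (R c t ` V (blk c))" using iV by (intro Max_ge) auto
  ultimately have "Min (R c t ` V (blk c)) \<le> Max (R c t ` V (blk c))" by linarith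
  then show ?thesis unfolding sp_def by simp
qed (simp add: sp_def)

lemma gamma_lim: "\<gamma> \<longlonglongrightarrow> 0"
proof -
  have "(\<lambda>k. (\<gamma> k)\<^sup>2) \<longlonglongrightarrow> 0" using summable_LIMSEQ_zero[OF gamma_sq_sum] .
  hence "(\<lambda>k. sqrt ((\<gamma> k)\<^sup>2)) \<longlonglongrightarrow> sqrt 0" by (rule tendsto_real_sqrt)
  thus ?thesis using gamma_pos by (simp add: less_imp_le)
qed

lemma sp_rec: assumes ne: "V (blk c) \<noteq> {}"
  shows "sp c (t + Mp (blk c)) \<le> (1 - eta (blk c) ^ Mp (blk c)) * sp c t + (2 * real (Mp (blk c)) * K1 (blk c)) * \<gamma> t"
proof -
  define p where "p = blk c"
  have ne': "V p \<noteq> {}" using ne p_def by simp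
  have eta0: "eta p \<ge> 0" unfolding eta_def using nu_pos dl_pos[of p] by simp
  have K0: "K1 p \<ge> 0" unfolding K1_def using L_pos dl_pos[of p] by simp
  have sc: "Max (R c (t + card (V p) * (2*Q)) ` V p) - Min (R c (t + card (V p) * (2*Q)) ` V p)
         \<le> (1 - (eta p)^(card (V p) * (2*Q))) * (Max (R c t ` V p) - Min (R c t ` V p))
            + 2 * (\<Sum>u<card (V p) * (2*Q). \<gamma> (t + u) * K1 p)"
  proof (rule spread_contract[where B="Bm p" and E="\<lambda>t. E (Suc t) p" and e="ee c", OF finV ne'])
    show "\<And>t i l. i \<in> V p \<Longrightarrow> l \<in> V p \<Longrightarrow> 0 \<le> Bm p t i l" by (rule Bm_nn)
    show "\<And>t i. i \<in> V p \<Longrightarrow> (\<Sum>l\<in>V p. Bm p t i l) = 1" by (rule Bm_row)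
    show "\<And>t i l. i \<in> V p \<Longrightarrow> l \<in> V p \<Longrightarrow> (l, i) \<in> E (Suc t) p \<Longrightarrow> eta p \<le> Bm p t i l"
      unfolding eta_def by (rule Bm_edge)
    show "\<And>t i. i \<in> V p \<Longrightarrow> (i, i) \<in> E (Suc t) p" by (rule selfloop)
    show "0 \<le> eta p" by (rule eta0)
    show "\<And>t. E (Suc t) p \<subseteq> V p \<times> V p" by (rule E_sub)
    show "\<And>T'. \<exists>a. T' \<le> a \<and> a + Q \<le> T' + 2 * Q \<and> (\<forall>i\<in>V p. \<forall>k\<in>V p. (i, k) \<in> (\<Union>t\<in>{a..<a + Q}. E (Suc t) p)\<^sup>*)"
      using conn1 by simp
    show "\<And>t i. i \<in> V p \<Longrightarrow> R c (Suc t) i = (\<Sum>l\<in>V p. Bm p t i l * R c t l) + ee c t i"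
      using R_rec p_def by simp
    show "\<And>t i. i \<in> V p \<Longrightarrow> \<bar>ee c t i\<bar> \<le> \<gamma> t * K1 p"
      using ee_bound p_def unfolding K1_def by simp
  qed
  have "(\<Sum>u<card (V p) * (2*Q). \<gamma> (t + u) * K1 p) \<le> (\<Sum>u<card (V p) * (2*Q). \<gamma> t * K1 p)"
    by (rule sum_mono) (use noninc_add[of \<gamma>, OF gamma_noninc] K0 in \<open>auto intro: mult_right_mono\<close>)
  also have "\<dots> = real (Mp p) * K1 p * \<gamma> t" unfolding Mp_def by simp
  finally have bnd: "2 * (\<Sum>u<card (V p) * (2*Q). \<gamma> (t + u) * K1 p) \<le> 2 * real (Mp p) * K1 p * \<gamma> t" by simp
  have e1: "sp c (t + Mp p) = Max (R c (t + card (V p) * (2*Q)) ` V p) - Min (R c (t + card (V p) * (2*Q)) ` V p)"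
    unfolding sp_def Mp_def using ne p_def by simp
  have e2: "sp c t = Max (R c t ` V p) - Min (R c t ` V p)" unfolding sp_def using ne p_def by simp
  have "sp c (t + Mp p) \<le> (1 - eta p ^ Mp p) * sp c t + (2 * real (Mp p) * K1 p) * \<gamma> t"
    unfolding e1 e2 using sc bnd unfolding Mp_def by linarith
  thus ?thesis unfolding p_def .
qed

lemma eta_props: assumes "V p \<noteq> {}" shows "eta p > 0" "eta p \<le> 1"
proof -
  obtain i where iV: "i \<in> V p" using assms by blast
  have "card (V p) > 0" using iV by (auto simp: card_gt_0_iff)
  hence c1: "real (card (V p)) \<ge> 1" by simp
  show "eta p > 0" unfolding eta_def using nu_pos dl_pos[of p] c1 by simp
  have "dl p \<le> 1" unfolding dl_def using nu_pos nu_le1[OF iV] by (simp add: power_le_one)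
  hence "\<nu> * dl p \<le> 1 * 1" using nu_pos nu_le1[OF iV] dl_pos[of p] by (intro mult_mono) auto
  thus "eta p \<le> 1" unfolding eta_def using c1 by (simp add: divide_le_eq)
qed

lemma sp_conv: "sp c \<longlonglongrightarrow> 0 \<and> summable (\<lambda>t. \<gamma> t * sp c t)"
proof (cases "V (blk c) = {}")
  case True
  then show ?thesis unfolding sp_def by simp
next
  case False
  define p where "p = blk c"
  have ne: "V p \<noteq> {}" using False p_def by simp
  have M0: "Mp p > 0" unfolding Mp_def using ne finV[of p] Q_pos by (simp add: card_gt_0_iff)
  have e1: "eta p ^ Mp p > 0" using eta_props(1)[OF ne] by simp
  have e2: "eta p ^ Mp p \<le> 1" using eta_props[OF ne] by (simp add: power_le_one)
  have K0: "K1 p \<ge> 0" unfolding K1_def using L_pos dl_pos[of p] by simp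
  have rec: "sp c (k + Mp p) \<le> (1 - eta p ^ Mp p) * sp c k + (2 * real (Mp p) * K1 p) * \<gamma> k" for k
    using sp_rec[OF False, of k] p_def by simp
  have "sp c \<longlonglongrightarrow> 0"
    by (rule seq_contract_lim[OF sp_nn _ _ _ M0 rec gamma_lim]) (use e1 e2 K0 in auto)
  moreover have "summable (\<lambda>t. \<gamma> t * sp c t)"
    by (rule seq_contract_summable[OF sp_nn _ _ _ rec _ gamma_noninc gamma_sq_sum])
       (use e1 e2 K0 gamma_pos in \<open>auto intro: less_imp_le\<close>)
  ultimately show ?thesis by blast
qed


definition "dd c = real (card (V (blk c)))"
definition "Xa t = (\<chi> c. (\<Sum>j\<in>V (blk c). z t j (blk c) $ c) / dd c)"

lemma sumw: "(\<Sum>i\<in>V p. w (Suc t) i p) = (\<Sum>j\<in>V p. z t j p)"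
proof -
  have "(\<Sum>i\<in>V p. w (Suc t) i p) = (\<Sum>i\<in>V p. \<Sum>j\<in>V p. W t p i j *\<^sub>R z t j p)"
    using w_step by simp
  also have "\<dots> = (\<Sum>j\<in>V p. \<Sum>i\<in>V p. W t p i j *\<^sub>R z t j p)" by (rule sum.swap)
  also have "\<dots> = (\<Sum>j\<in>V p. (\<Sum>i\<in>V p. W t p i j) *\<^sub>R z t j p)" by (simp add: scaleR_sum_left)
  also have "\<dots> = (\<Sum>j\<in>V p. z t j p)" using col_stoch by simp
  finally show ?thesis .
qed

lemma X_close: assumes iV: "i \<in> V (blk c)" shows "\<bar>R c t i - Xa t $ c\<bar> \<le> sp c t"
proof -
  define p where "p = blk c"
  have iV': "i \<in> V p" using iV p_def by simp
  have ne: "V p \<noteq> {}" using iV' by blast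
  have N: "dd c > 0" unfolding dd_def using iV by (auto simp: card_gt_0_iff)
  have "(\<Sum>j\<in>V p. z t j p $ c) = (\<Sum>i\<in>V p. w (Suc t) i p $ c)" using sumw[where p=p and t=t] by (metis sum_component)
  also have "\<dots> = (\<Sum>i\<in>V p. q (Suc t) i p * R c t i)"
    by (rule sum.cong) (simp_all add: w_eq R_def p_def)
  finally have sz: "(\<Sum>j\<in>V p. z t j p $ c) = (\<Sum>i\<in>V p. q (Suc t) i p * R c t i)" .
  have "Xa t $ c = (\<Sum>j\<in>V p. z t j p $ c) / dd c" unfolding Xa_def p_def by simp
  also have "\<dots> = (\<Sum>i\<in>V p. q (Suc t) i p * R c t i) / dd c" using sz by simp
  also have "\<dots> = (\<Sum>i\<in>V p. (q (Suc t) i p / dd c) * R c t i)" by (simp add: sum_divide_distrib)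
  finally have Xe: "Xa t $ c = (\<Sum>i\<in>V p. (q (Suc t) i p / dd c) * R c t i)" .
  have w1: "(\<Sum>i\<in>V p. q (Suc t) i p / dd c) = 1"
    using q_sum[where p=p and k="Suc t"] N iV unfolding dd_def p_def by (auto simp: sum_divide_distrib[symmetric])
  have "Min (R c t ` V p) \<le> Xa t $ c \<and> Xa t $ c \<le> Max (R c t ` V p)"
    unfolding Xe by (rule wavg[OF finV ne _ w1]) (use N q_pos in \<open>auto intro: less_imp_le\<close>)
  moreover have "Min (R c t ` V p) \<le> R c t i" "R c t i \<le> Max (R c t ` V p)" using iV' by auto
  moreover have "sp c t = Max (R c t ` V p) - Min (R c t ` V p)" unfolding sp_def using ne p_def by simp
  ultimately show ?thesis by linarith
qed

lemma G_sum_V: "(\<Sum>j\<in>V (blk c). G (Suc t) j $ c) = (\<Sum>j\<in>UNIV. G (Suc t) j $ c)"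
proof (rule sum.mono_neutral_left)
  show "\<forall>j\<in>UNIV - V (blk c). G (Suc t) j $ c = 0"
  proof
    fix j assume "j \<in> UNIV - V (blk c)"
    hence "blk c \<notin> N j" using V_sup by blast
    thus "G (Suc t) j $ c = 0" by (rule G_zero)
  qed
qed auto

lemma X_step: "Xa (Suc t) $ c = Xa t $ c - \<gamma> t / dd c * (\<Sum>j\<in>UNIV. G (Suc t) j $ c)"
proof -
  define p where "p = blk c"
  have "(\<Sum>j\<in>V p. z (Suc t) j p $ c) = (\<Sum>j\<in>V p. w (Suc t) j p $ c - \<gamma> t * G (Suc t) j $ c)"
    by (rule sum.cong) (simp_all add: z_step blockproj_def p_def)
  also have "\<dots> = (\<Sum>j\<in>V p. w (Suc t) j p $ c) - \<gamma> t * (\<Sum>j\<in>V p. G (Suc t) j $ c)"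
    by (simp add: sum_subtractf sum_distrib_left)
  also have "(\<Sum>j\<in>V p. w (Suc t) j p $ c) = (\<Sum>j\<in>V p. z t j p $ c)" using sumw[where p=p and t=t] by (metis sum_component)
  also have "(\<Sum>j\<in>V p. G (Suc t) j $ c) = (\<Sum>j\<in>UNIV. G (Suc t) j $ c)" unfolding p_def by (rule G_sum_V)
  finally have "(\<Sum>j\<in>V p. z (Suc t) j p $ c) = (\<Sum>j\<in>V p. z t j p $ c) - \<gamma> t * (\<Sum>j\<in>UNIV. G (Suc t) j $ c)" .
  thus ?thesis unfolding Xa_def p_def by (simp add: diff_divide_distrib)
qed


definition "Ftot v = (\<Sum>i\<in>UNIV. f i v)"
definition "St t = (\<Sum>c\<in>UNIV. sp c t)"
definition "II = real (card (UNIV::'a set))"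
definition "Cg = (\<Sum>c\<in>(UNIV::'c set). (II * L)\<^sup>2)"
definition "bet t = 4 * II * L * \<gamma> t * St t + (\<gamma> t)\<^sup>2 * Cg"

lemma G_comp: "\<bar>G (Suc t) j $ c\<bar> \<le> L"
  using component_le_norm_cart[of "G (Suc t) j" c] subgrad_bound[OF G_subgrad] by (meson order_trans)

lemma per_agent: "G (Suc t) j \<bullet> (Xa t - v) \<ge> f j (Xa t) - f j v - 2 * L * St t"
proof -
  define yt where "yt = ytil (Suc t) j"
  define Rel where "Rel = {c. blk c \<in> N j}"
  define \<Delta> where "\<Delta> = (\<Sum>c\<in>Rel. \<bar>Xa t $ c - yt $ c\<bar>)"
  have D: "\<Delta> \<le> St t"
  proof -
    have "\<Delta> \<le> (\<Sum>c\<in>Rel. sp c t)" unfolding \<Delta>_def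
    proof (rule sum_mono)
      fix c assume c: "c \<in> Rel"
      hence jV: "j \<in> V (blk c)" using V_sup unfolding Rel_def by blast
      have "yt $ c = R c t j" unfolding yt_def R_def using ytil_def[OF jV] .
      thus "\<bar>Xa t $ c - yt $ c\<bar> \<le> sp c t" using X_close[OF jV, of t] by linarith
    qed
    also have "\<dots> \<le> St t" unfolding St_def by (rule sum_mono2) (auto simp: sp_nn)
    finally show ?thesis .
  qed
  have sg: "subgradient (f j) yt (G (Suc t) j)" unfolding yt_def by (rule G_subgrad)
  have a1: "G (Suc t) j \<bullet> (yt - v) \<ge> f j yt - f j v"
  proof -
    have "f j v \<ge> f j yt + G (Suc t) j \<bullet> (v - yt)" using sg unfolding subgradient_def by blast
    moreover have "G (Suc t) j \<bullet> (v - yt) = - (G (Suc t) j \<bullet> (yt - v))" by (simp add: inner_diff_right)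
    ultimately show ?thesis by linarith
  qed
  have "G (Suc t) j \<bullet> (Xa t - yt) = (\<Sum>c\<in>UNIV. G (Suc t) j $ c * (Xa t $ c - yt $ c))"
    by (simp add: inner_vec_sum_cart)
  also have "\<dots> = (\<Sum>c\<in>Rel. G (Suc t) j $ c * (Xa t $ c - yt $ c))"
    by (rule sum.mono_neutral_right) (auto simp: Rel_def G_zero)
  also have "\<dots> \<ge> (\<Sum>c\<in>Rel. - (L * \<bar>Xa t $ c - yt $ c\<bar>))"
  proof (rule sum_mono)
    fix c
    have "\<bar>G (Suc t) j $ c * (Xa t $ c - yt $ c)\<bar> \<le> L * \<bar>Xa t $ c - yt $ c\<bar>"
      unfolding abs_mult using G_comp by (intro mult_right_mono) auto
    thus "- (L * \<bar>Xa t $ c - yt $ c\<bar>) \<le> G (Suc t) j $ c * (Xa t $ c - yt $ c)" by linarith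
  qed
  finally have a2: "G (Suc t) j \<bullet> (Xa t - yt) \<ge> - (L * \<Delta>)"
    unfolding \<Delta>_def by (simp add: sum_negf sum_distrib_left)
  have a3: "f j (Xa t) - f j yt \<le> L * \<Delta>" unfolding \<Delta>_def Rel_def
    using lip_rel[where f="f j" and P="\<lambda>c. blk c \<in> N j" and L=L and u="Xa t" and v=yt, OF convex depends subgrad_bound] by simp
  have split: "G (Suc t) j \<bullet> (Xa t - v) = G (Suc t) j \<bullet> (yt - v) + G (Suc t) j \<bullet> (Xa t - yt)"
    by (simp add: inner_diff_right)
  have "L * \<Delta> \<le> L * St t" using D L_pos by simp
  thus ?thesis using a1 a2 a3 split by linarith
qed


lemma dd_cases: "dd c = 0 \<or> dd c \<ge> 1"
  unfolding dd_def by (cases "card (V (blk c))") auto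

lemma dd_zero_G: "dd c = 0 \<Longrightarrow> (\<Sum>j\<in>UNIV. G (Suc t) j $ c) = 0"
proof -
  assume "dd c = 0"
  hence "V (blk c) = {}" unfolding dd_def by simp
  thus ?thesis using G_sum_V[where c=c and t=t] by simp
qed

lemma gc_bound: "\<bar>\<Sum>j\<in>UNIV. G (Suc t) j $ c\<bar> \<le> II * L"
proof -
  have "\<bar>\<Sum>j\<in>UNIV. G (Suc t) j $ c\<bar> \<le> (\<Sum>j\<in>(UNIV::'a set). \<bar>G (Suc t) j $ c\<bar>)" by (rule sum_abs)
  also have "\<dots> \<le> (\<Sum>j\<in>(UNIV::'a set). L)" by (rule sum_mono) (rule G_comp)
  also have "\<dots> = II * L" unfolding II_def by simp
  finally show ?thesis .
qed

lemma desc: "Dw dd (Xa (Suc t)) v \<le> Dw dd (Xa t) v - 2 * \<gamma> t * (Ftot (Xa t) - Ftot v) + bet t"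
proof -
  define gc where "gc c = (\<Sum>j\<in>UNIV. G (Suc t) j $ c)" for c
  have percoord: "dd c * (Xa (Suc t) $ c - v $ c)\<^sup>2 =
      dd c * (Xa t $ c - v $ c)\<^sup>2 - 2 * \<gamma> t * (gc c * (Xa t $ c - v $ c)) + (\<gamma> t)\<^sup>2 * ((gc c)\<^sup>2 / dd c)" for c
  proof (cases "dd c = 0")
    case True
    then show ?thesis using dd_zero_G[OF True, where t=t] unfolding gc_def by simp
  next
    case False
    show ?thesis unfolding X_step gc_def[symmetric] using False
      by (simp add: field_simps power2_eq_square)
  qed
  have sq: "(gc c)\<^sup>2 / dd c \<le> (II * L)\<^sup>2" for c
  proof (cases "dd c = 0")
    case True then show ?thesis by simp
  next
    case False
    hence d1: "dd c \<ge> 1" using dd_cases[of c] by auto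
    have g0: "(gc c)\<^sup>2 \<ge> 0" by simp
    have "(gc c)\<^sup>2 / dd c \<le> (gc c)\<^sup>2" using d1 g0 by (simp add: divide_le_eq mult_le_cancel_left1)
    also have "(gc c)\<^sup>2 \<le> (II * L)\<^sup>2"
      using power_mono[OF gc_bound[where c=c and t=t] abs_ge_zero, of 2] unfolding gc_def by simp
    finally show ?thesis .
  qed
  have inner_sum: "(\<Sum>c\<in>UNIV. gc c * (Xa t $ c - v $ c)) = (\<Sum>j\<in>UNIV. G (Suc t) j \<bullet> (Xa t - v))"
  proof -
    have "(\<Sum>c\<in>UNIV. gc c * (Xa t $ c - v $ c)) = (\<Sum>c\<in>UNIV. \<Sum>j\<in>UNIV. G (Suc t) j $ c * (Xa t $ c - v $ c))"
      unfolding gc_def by (simp add: sum_distrib_right)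
    also have "\<dots> = (\<Sum>j\<in>UNIV. \<Sum>c\<in>UNIV. G (Suc t) j $ c * (Xa t $ c - v $ c))" by (rule sum.swap)
    also have "\<dots> = (\<Sum>j\<in>UNIV. G (Suc t) j \<bullet> (Xa t - v))" by (simp add: inner_vec_sum_cart)
    finally show ?thesis .
  qed
  have agents: "(\<Sum>j\<in>UNIV. G (Suc t) j \<bullet> (Xa t - v)) \<ge> Ftot (Xa t) - Ftot v - 2 * II * L * St t"
  proof -
    have "(\<Sum>j\<in>(UNIV::'a set). f j (Xa t) - f j v - 2 * L * St t) \<le> (\<Sum>j\<in>UNIV. G (Suc t) j \<bullet> (Xa t - v))"
      by (rule sum_mono) (rule per_agent)
    moreover have "(\<Sum>j\<in>(UNIV::'a set). f j (Xa t) - f j v - 2 * L * St t) = Ftot (Xa t) - Ftot v - 2 * II * L * St t"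
      unfolding Ftot_def II_def by (simp add: sum_subtractf)
    ultimately show ?thesis by simp
  qed
  have "Dw dd (Xa (Suc t)) v = (\<Sum>c\<in>UNIV. dd c * (Xa t $ c - v $ c)\<^sup>2 - 2 * \<gamma> t * (gc c * (Xa t $ c - v $ c)) + (\<gamma> t)\<^sup>2 * ((gc c)\<^sup>2 / dd c))"
    unfolding Dw_def using percoord by simp
  also have "\<dots> = Dw dd (Xa t) v - 2 * \<gamma> t * (\<Sum>c\<in>UNIV. gc c * (Xa t $ c - v $ c)) + (\<gamma> t)\<^sup>2 * (\<Sum>c\<in>UNIV. (gc c)\<^sup>2 / dd c)"
    unfolding Dw_def by (simp add: sum.distrib sum_subtractf sum_distrib_left)
  also have "(\<Sum>c\<in>UNIV. (gc c)\<^sup>2 / dd c) \<le> Cg" unfolding Cg_def by (rule sum_mono) (rule sq)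
  finally have A: "Dw dd (Xa (Suc t)) v \<le> Dw dd (Xa t) v - 2 * \<gamma> t * (\<Sum>c\<in>UNIV. gc c * (Xa t $ c - v $ c)) + (\<gamma> t)\<^sup>2 * Cg"
    by (simp add: mult_left_mono)
  have g: "\<gamma> t > 0" by (rule gamma_pos)
  have "2 * \<gamma> t * (\<Sum>c\<in>UNIV. gc c * (Xa t $ c - v $ c)) \<ge> 2 * \<gamma> t * (Ftot (Xa t) - Ftot v - 2 * II * L * St t)"
    unfolding inner_sum using agents g by (intro mult_left_mono) auto
  with A show ?thesis unfolding bet_def by (simp add: algebra_simps)
qed


lemma main: "\<exists>ys. (\<forall>y'. (\<Sum>i\<in>UNIV. f i ys) \<le> (\<Sum>i\<in>UNIV. f i y')) \<and>
           (\<forall>p. \<forall>i\<in>V p. (\<lambda>k. blockproj blk p (y k i p)) \<longlonglongrightarrow> blockproj blk p ys)"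
proof -
  obtain ys0 where ys0: "\<And>y'. Ftot ys0 \<le> Ftot y'" using solvable unfolding Ftot_def by blast
  have Fcont: "continuous_on UNIV Ftot"
  proof -
    have "continuous_on UNIV (\<lambda>v. \<Sum>i\<in>UNIV. f i v)"
      by (intro continuous_on_sum convex_on_continuous[OF open_UNIV convex])
    thus ?thesis unfolding Ftot_def[abs_def] .
  qed
  have St0: "St t \<ge> 0" for t unfolding St_def by (intro sum_nonneg) (simp add: sp_nn)
  have II0: "II \<ge> 0" unfolding II_def by simp
  have Cg0: "Cg \<ge> 0" unfolding Cg_def by (intro sum_nonneg) simp
  have b0: "bet t \<ge> 0" for t
  proof -
    have "0 \<le> 4 * II * L * \<gamma> t * St t"
      using St0[of t] II0 L_pos gamma_pos[of t] by (intro mult_nonneg_nonneg) auto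
    moreover have "0 \<le> (\<gamma> t)\<^sup>2 * Cg" using Cg0 by simp
    ultimately show ?thesis unfolding bet_def by linarith
  qed
  have gS: "summable (\<lambda>t. \<gamma> t * St t)"
  proof -
    have "summable (\<lambda>t. \<Sum>c\<in>UNIV. \<gamma> t * sp c t)" by (rule summable_sum) (use sp_conv in blast)
    thus ?thesis unfolding St_def by (simp add: sum_distrib_left)
  qed
  have bs: "summable bet"
  proof -
    have "summable (\<lambda>t. (4 * II * L) * (\<gamma> t * St t) + Cg * (\<gamma> t)\<^sup>2)"
      by (intro summable_add summable_mult gS gamma_sq_sum)
    thus ?thesis unfolding bet_def[abs_def] by (simp add: algebra_simps)
  qed
  have const: "Xa t $ c = Xa 0 $ c" if "dd c = 0" for c t unfolding Xa_def using that by simp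
  have desc': "Dw dd (Xa (Suc t)) v \<le> Dw dd (Xa t) v - 2 * \<gamma> t * (Ftot (Xa t) - Ftot v) + bet t"
    if "\<And>y'. Ftot v \<le> Ftot y'" for t v by (rule desc)
  obtain x where xmin: "\<forall>y'. Ftot x \<le> Ftot y'" and xlim: "\<forall>c. dd c \<noteq> 0 \<longrightarrow> (\<lambda>t. Xa t $ c) \<longlonglongrightarrow> x $ c"
    using opt_conv[where d=dd and X=Xa and F=Ftot and \<gamma>=\<gamma> and \<beta>=bet,
        OF dd_cases const Fcont ys0 desc' bs b0 gamma_pos gamma_nonsum] by blast
  have conv: "(\<lambda>k. blockproj blk p (y k i p)) \<longlonglongrightarrow> blockproj blk p x" if iV: "i \<in> V p" for p i
  proof (rule vec_tendstoI)
    fix c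
    show "(\<lambda>k. blockproj blk p (y k i p) $ c) \<longlonglongrightarrow> blockproj blk p x $ c"
    proof (cases "blk c = p")
      case False
      then show ?thesis unfolding blockproj_def by simp
    next
      case True
      have iV': "i \<in> V (blk c)" using iV True by simp
      have "dd c \<noteq> 0" unfolding dd_def using iV' by (auto simp: card_gt_0_iff)
      hence X: "(\<lambda>t. Xa t $ c) \<longlonglongrightarrow> x $ c" using xlim by blast
      have "(\<lambda>t. R c t i - Xa t $ c) \<longlonglongrightarrow> 0"
      proof (rule tendsto_sandwich[of "\<lambda>t. - sp c t" _ _ "\<lambda>t. sp c t"])
        have bnd: "- sp c t \<le> R c t i - Xa t $ c \<and> R c t i - Xa t $ c \<le> sp c t" for t
          using X_close[OF iV', of t] by (simp add: abs_le_iff)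
        show "\<forall>\<^sub>F t in sequentially. - sp c t \<le> R c t i - Xa t $ c" using bnd by (intro always_eventually) blast
        show "\<forall>\<^sub>F t in sequentially. R c t i - Xa t $ c \<le> sp c t" using bnd by (intro always_eventually) blast
        show "(\<lambda>t. - sp c t) \<longlonglongrightarrow> 0" using tendsto_minus[OF conjunct1[OF sp_conv]] by simp
        show "(\<lambda>t. sp c t) \<longlonglongrightarrow> 0" using conjunct1[OF sp_conv] .
      qed
      hence "(\<lambda>t. (R c t i - Xa t $ c) + Xa t $ c) \<longlonglongrightarrow> 0 + x $ c" using X by (rule tendsto_add)
      hence "(\<lambda>t. y (Suc t) i p $ c) \<longlonglongrightarrow> x $ c" unfolding R_def using True by simp
      hence "(\<lambda>k. y k i p $ c) \<longlonglongrightarrow> x $ c" by (rule LIMSEQ_imp_Suc)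
      thus ?thesis unfolding blockproj_def using True by simp
    qed
  qed
  show ?thesis using xmin conv unfolding Ftot_def by blast
qed

end

theorem theorem4:
  fixes f :: "'a::finite \<Rightarrow> real^'c::finite \<Rightarrow> real"
    and blk :: "'c \<Rightarrow> 'p::finite"
    and N :: "'a \<Rightarrow> 'p set"
    and V :: "'p \<Rightarrow> 'a set"
    and E :: "nat \<Rightarrow> 'p \<Rightarrow> ('a \<times> 'a) set"
    and W :: "nat \<Rightarrow> 'p \<Rightarrow> 'a \<Rightarrow> 'a \<Rightarrow> real"
    and \<nu> L :: real and Q :: nat
    and \<gamma> :: "nat \<Rightarrow> real"
    and q :: "nat \<Rightarrow> 'a \<Rightarrow> 'p \<Rightarrow> real"
    and w y z :: "nat \<Rightarrow> 'a \<Rightarrow> 'p \<Rightarrow> real^'c"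
    and ytil G :: "nat \<Rightarrow> 'a \<Rightarrow> real^'c"
  assumes solvable: "\<exists>ys. \<forall>y'. (\<Sum>i\<in>UNIV. f i ys) \<le> (\<Sum>i\<in>UNIV. f i y')"
    and depends: "\<And>i u v. (\<forall>c. blk c \<in> N i \<longrightarrow> u $ c = v $ c) \<Longrightarrow> f i u = f i v"
    and V_sup: "\<And>p. {i. p \<in> N i} \<subseteq> V p"
    and E_sub: "\<And>k p. E k p \<subseteq> V p \<times> V p"
    and W_edge: "\<And>k p i j. i \<in> V p \<Longrightarrow> j \<in> V p \<Longrightarrow> (j, i) \<in> E k p \<Longrightarrow> W k p i j > 0"
    and W_noedge: "\<And>k p i j. i \<in> V p \<Longrightarrow> j \<in> V p \<Longrightarrow> (j, i) \<notin> E k p \<Longrightarrow> W k p i j = 0"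
    and selfloop: "\<And>k p i. i \<in> V p \<Longrightarrow> (i, i) \<in> E k p"
    and col_stoch: "\<And>k p j. j \<in> V p \<Longrightarrow> (\<Sum>i\<in>V p. W k p i j) = 1"
    and nu_pos: "\<nu> > 0"
    and W_lb: "\<And>k p i j. (j, i) \<in> E k p \<Longrightarrow> W k p i j \<ge> \<nu>"
    and Q_pos: "Q > 0"
    and strongly_conn: "\<And>p k i j. i \<in> V p \<Longrightarrow> j \<in> V p \<Longrightarrow>
          (i, j) \<in> (\<Union>t\<in>{k*Q..<(Suc k)*Q}. E t p)\<^sup>*"
    and convex: "\<And>i. convex_on UNIV (f i)"
    and L_pos: "L > 0"
    and subgrad_bound: "\<And>i u g. subgradient (f i) u g \<Longrightarrow> norm g \<le> L"
    and gamma_pos: "\<And>k. \<gamma> k > 0"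
    and gamma_noninc: "\<And>k. \<gamma> (Suc k) \<le> \<gamma> k"
    and gamma_nonsum: "\<not> summable \<gamma>"
    and gamma_sq_sum: "summable (\<lambda>k. (\<gamma> k)\<^sup>2)"
    and q_init: "\<And>p i. i \<in> V p \<Longrightarrow> q 0 i p = 1"
    and q_step: "\<And>k p i. i \<in> V p \<Longrightarrow> q (Suc k) i p = (\<Sum>j\<in>V p. W k p i j * q k j p)"
    and w_step: "\<And>k p i. i \<in> V p \<Longrightarrow> w (Suc k) i p = (\<Sum>j\<in>V p. W k p i j *\<^sub>R z k j p)"
    and y_step: "\<And>k p i. i \<in> V p \<Longrightarrow> y (Suc k) i p = (1 / q (Suc k) i p) *\<^sub>R w (Suc k) i p"
    and ytil_def: "\<And>k i c. i \<in> V (blk c) \<Longrightarrow> ytil k i $ c = y k i (blk c) $ c"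
    and G_subgrad: "\<And>k i. subgradient (f i) (ytil (Suc k) i) (G (Suc k) i)"
    and z_step: "\<And>k p i. i \<in> V p \<Longrightarrow>
          z (Suc k) i p = w (Suc k) i p - \<gamma> k *\<^sub>R blockproj blk p (G (Suc k) i)"
  shows "\<exists>ys. (\<forall>y'. (\<Sum>i\<in>UNIV. f i ys) \<le> (\<Sum>i\<in>UNIV. f i y')) \<and>
           (\<forall>p. \<forall>i\<in>V p. (\<lambda>k. blockproj blk p (y k i p)) \<longlonglongrightarrow> blockproj blk p ys)"
  proof -
  interpret PS f blk N V E W \<nu> L Q \<gamma> q w y z ytil G
    by (rule PS.intro[OF assms])
  show ?thesis by (rule main)
qed

end
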